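(* Assume the Hamiltonian is thermodynamically stable. Let $u=\mathcal{U}(\beta)/|\Lambda|$ and $V(u)=\mathrm{Av}(u^2)-\mathrm{Av}(u)^2$. Then for every $0<\beta_1<\beta_2$, in the thermodynamic limit $|\Lambda|\to\infty$, $$\int_{\beta_1}^{\beta_2}V(u)\,d\beta\to0.$$
   Context: For each finite $d$-dimensional parallelepiped $\Lambda\subset\mathbb{Z}^d$ let $\Sigma_\Lambda=\{-1,1\}^\Lambda$, and for $X\subset\Lambda$ let $\sigma_X=\prod_{i\in X}\sigma_i$ (with $\sigma_\emptyset=0$). Let $\{J_X\}$ be independent centered Gaussian random variables with variances $\mathrm{Av}(J_X^2)=\Delta_X^2$, translation invariant, where $\mathrm{Av}$ denotes expectation over the $J$'s. The Hamiltonian is $H_\Lambda(\sigma)=-\sum_{X\subset\Lambda}J_X\sigma_X$, $\mathcal{Z}(\beta)=\sum_{\sigma\in\Sigma_\Lambda}e^{-\beta H_\Lambda(\sigma)}$, and the random internal energy is $\mathcal{U}(\beta)=\sum_\sigma H_\Lambda(\sigma)e^{-\beta H_\Lambda(\sigma)}/\mathcal{Z}(\beta)$. The Hamiltonian is thermodynamically stable if there is $\bar c<\infty$ with $\sup_{\Lambda}\frac{1}{|\Lambda|}\sum_{X\subset\Lambda}\Delta_X^2\le\bar c$. The thermodynamic limit is the limit along boxes $\Lambda$ with $|\Lambda|\to\infty$. *)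

theory Defs
  imports "HOL-Probability.Probability"
begin

definition lattice_box :: "int ^ 'd \<Rightarrow> int ^ 'd \<Rightarrow> (int ^ 'd) set" where
  "lattice_box a b = {x. \<forall>i. a $ i \<le> x $ i \<and> x $ i \<le> b $ i}"

definition is_box :: "(int ^ 'd) set \<Rightarrow> bool" where
  "is_box L \<longleftrightarrow> (\<exists>a b. L = lattice_box a b)"

definition configs :: "'i set \<Rightarrow> ('i \<Rightarrow> real) set" where
  "configs L = PiE L (\<lambda>_. {-1, 1})"

text \<open>sigma_X = product of spins in X, with the paper's convention sigma_emptyset = 0.\<close>
definition sigmaX :: "('i \<Rightarrow> real) \<Rightarrow> 'i set \<Rightarrow> real" where
  "sigmaX \<sigma> X = (if X = {} then 0 else (\<Prod>i\<in>X. \<sigma> i))"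

definition Ham :: "'i set \<Rightarrow> ('i set \<Rightarrow> real) \<Rightarrow> ('i \<Rightarrow> real) \<Rightarrow> real" where
  "Ham L J \<sigma> = - (\<Sum>X\<in>Pow L. J X * sigmaX \<sigma> X)"

definition partition_fn :: "'i set \<Rightarrow> ('i set \<Rightarrow> real) \<Rightarrow> real \<Rightarrow> real" where
  "partition_fn L J \<beta> = (\<Sum>\<sigma>\<in>configs L. exp (- \<beta> * Ham L J \<sigma>))"

definition internal_energy :: "'i set \<Rightarrow> ('i set \<Rightarrow> real) \<Rightarrow> real \<Rightarrow> real" where
  "internal_energy L J \<beta> =
     (\<Sum>\<sigma>\<in>configs L. Ham L J \<sigma> * exp (- \<beta> * Ham L J \<sigma>)) / partition_fn L J \<beta>"

definition thermo_stable :: "((int ^ 'd) set \<Rightarrow> real) \<Rightarrow> bool" where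
  "thermo_stable \<Delta> \<longleftrightarrow>
     (\<exists>c. \<forall>L. is_box L \<longrightarrow> (\<Sum>X\<in>Pow L. (\<Delta> X)\<^sup>2) / real (card L) \<le> c)"

definition energy_variance ::
  "'a measure \<Rightarrow> ('i set \<Rightarrow> 'a \<Rightarrow> real) \<Rightarrow> 'i set \<Rightarrow> real \<Rightarrow> real" where
  "energy_variance M J L \<beta> =
     (let u = (\<lambda>\<omega>. internal_energy L (\<lambda>X. J X \<omega>) \<beta> / real (card L))
      in (\<integral>\<omega>. (u \<omega>)\<^sup>2 \<partial>M) - (\<integral>\<omega>. u \<omega> \<partial>M)\<^sup>2)"

end

theory Submission
  imports Defs
begin

lemma (in prob_space) var_shift:
  fixes X :: "'a \<Rightarrow> real"
  assumes [measurable]: "X \<in> borel_measurable M" and sq: "integrable M (\<lambda>x. (X x)\<^sup>2)"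
  shows "(\<integral>x. (X x - c)\<^sup>2 \<partial>M) = variance X + (expectation X - c)\<^sup>2"
proof -
  have i: "integrable M X" using square_integrable_imp_integrable[OF _ sq] by simp
  have "(\<integral>x. (X x - c)\<^sup>2 \<partial>M) = (\<integral>x. (X x)\<^sup>2 - 2 * c * X x + c\<^sup>2 \<partial>M)"
    by (rule Bochner_Integration.integral_cong) (auto simp: power2_diff algebra_simps)
  also have "\<dots> = expectation (\<lambda>x. (X x)\<^sup>2) - 2 * c * expectation X + c\<^sup>2"
    using i sq by (simp add: prob_space)
  finally have 1: "(\<integral>x. (X x - c)\<^sup>2 \<partial>M) = expectation (\<lambda>x. (X x)\<^sup>2) - 2 * c * expectation X + c\<^sup>2" .
  have "variance X = (\<integral>x. (X x)\<^sup>2 - 2 * expectation X * X x + (expectation X)\<^sup>2 \<partial>M)"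
    by (rule Bochner_Integration.integral_cong) (auto simp: power2_diff algebra_simps)
  also have "\<dots> = expectation (\<lambda>x. (X x)\<^sup>2) - 2 * expectation X * expectation X + (expectation X)\<^sup>2"
    using i sq by (simp add: prob_space)
  finally show ?thesis using 1 by (simp add: power2_eq_square algebra_simps)
qed

lemma (in prob_space) var_le_shift:
  fixes X :: "'a \<Rightarrow> real"
  assumes "X \<in> borel_measurable M" and "integrable M (\<lambda>x. (X x)\<^sup>2)"
  shows "variance X \<le> (\<integral>x. (X x - c)\<^sup>2 \<partial>M)"
  using var_shift[OF assms, of c] by simp

lemma (in prob_space) var_eq_moments:
  fixes X :: "'a \<Rightarrow> real"
  assumes "X \<in> borel_measurable M" and "integrable M (\<lambda>x. (X x)\<^sup>2)"
  shows "(\<integral>x. (X x)\<^sup>2 \<partial>M) - (expectation X)\<^sup>2 = variance X"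
  using var_shift[OF assms, of 0] by simp

lemma sq_integrable_add:
  fixes X Y :: "'a \<Rightarrow> real"
  assumes [measurable]: "X \<in> borel_measurable M" "Y \<in> borel_measurable M"
    and "integrable M (\<lambda>x. (X x)\<^sup>2)" "integrable M (\<lambda>x. (Y x)\<^sup>2)"
  shows "integrable M (\<lambda>x. (X x + Y x)\<^sup>2)"
proof (rule Bochner_Integration.integrable_bound[where f="\<lambda>x. 2 * (X x)\<^sup>2 + 2 * (Y x)\<^sup>2"])
  show "integrable M (\<lambda>x. 2 * (X x)\<^sup>2 + 2 * (Y x)\<^sup>2)" using assms by auto
  show "AE x in M. norm ((X x + Y x)\<^sup>2) \<le> norm (2 * (X x)\<^sup>2 + 2 * (Y x)\<^sup>2)"
  proof (rule AE_I2)
    fix x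
    have "0 \<le> (X x - Y x)\<^sup>2" by simp
    then have "(X x + Y x)\<^sup>2 \<le> 2 * (X x)\<^sup>2 + 2 * (Y x)\<^sup>2"
      by (simp add: power2_eq_square algebra_simps)
    then show "norm ((X x + Y x)\<^sup>2) \<le> norm (2 * (X x)\<^sup>2 + 2 * (Y x)\<^sup>2)"
      by simp
  qed
qed simp

lemma sq_integrable_scale:
  fixes X :: "'a \<Rightarrow> real"
  assumes "integrable M (\<lambda>x. (X x)\<^sup>2)"
  shows "integrable M (\<lambda>x. (c * X x)\<^sup>2)"
  using integrable_mult_right[OF assms, of "c\<^sup>2"] by (simp add: power_mult_distrib)

lemma sq_integrable_diff:
  fixes X Y :: "'a \<Rightarrow> real"
  assumes [measurable]: "X \<in> borel_measurable M" "Y \<in> borel_measurable M"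
    and "integrable M (\<lambda>x. (X x)\<^sup>2)" "integrable M (\<lambda>x. (Y x)\<^sup>2)"
  shows "integrable M (\<lambda>x. (X x - Y x)\<^sup>2)"
  using sq_integrable_add[of X M "\<lambda>x. - Y x"] assms by simp

lemma sq_integrable_const:
  assumes "finite_measure M"
  shows "integrable M (\<lambda>x. (c::real))"
  using assms by (simp add: finite_measure.integrable_const)

lemma (in prob_space) var_diff_le:
  fixes X Y :: "'a \<Rightarrow> real"
  assumes [measurable]: "X \<in> borel_measurable M" "Y \<in> borel_measurable M"
    and sx: "integrable M (\<lambda>x. (X x)\<^sup>2)" and sy: "integrable M (\<lambda>x. (Y x)\<^sup>2)"
  shows "variance (\<lambda>x. X x - Y x) \<le> 2 * variance X + 2 * variance Y"
proof -
  have ix: "integrable M X" using square_integrable_imp_integrable[OF _ sx] by simp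
  have iy: "integrable M Y" using square_integrable_imp_integrable[OF _ sy] by simp
  let ?a = "expectation X" and ?b = "expectation Y"
  have e: "expectation (\<lambda>x. X x - Y x) = ?a - ?b" using ix iy by simp
  have vx: "integrable M (\<lambda>x. (X x - ?a)\<^sup>2)"
    using sq_integrable_diff[of X M "\<lambda>_. ?a"] sx by simp
  have vy: "integrable M (\<lambda>x. (Y x - ?b)\<^sup>2)"
    using sq_integrable_diff[of Y M "\<lambda>_. ?b"] sy by simp
  have "variance (\<lambda>x. X x - Y x) = (\<integral>x. ((X x - ?a) - (Y x - ?b))\<^sup>2 \<partial>M)"
    unfolding e by (simp add: algebra_simps)
  also have "\<dots> \<le> (\<integral>x. 2 * (X x - ?a)\<^sup>2 + 2 * (Y x - ?b)\<^sup>2 \<partial>M)"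
  proof (rule integral_mono)
    show "integrable M (\<lambda>x. ((X x - ?a) - (Y x - ?b))\<^sup>2)"
      by (rule sq_integrable_diff) (use vx vy in auto)
    show "integrable M (\<lambda>x. 2 * (X x - ?a)\<^sup>2 + 2 * (Y x - ?b)\<^sup>2)" using vx vy by auto
    fix x
    have "0 \<le> ((X x - ?a) + (Y x - ?b))\<^sup>2" by simp
    then show "((X x - ?a) - (Y x - ?b))\<^sup>2 \<le> 2 * (X x - ?a)\<^sup>2 + 2 * (Y x - ?b)\<^sup>2"
      by (simp add: power2_eq_square algebra_simps)
  qed
  also have "\<dots> = 2 * variance X + 2 * variance Y" using vx vy by simp
  finally show ?thesis .
qed


lemma sv_sq_integrable:
  fixes \<mu> :: "real measure" and \<phi> :: "real \<Rightarrow> real"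
  assumes P: "prob_space \<mu>" and S: "sets \<mu> = sets borel" and m2: "integrable \<mu> (\<lambda>t. t\<^sup>2)"
    and [measurable]: "\<phi> \<in> borel_measurable \<mu>"
    and L: "\<And>s t. \<bar>\<phi> s - \<phi> t\<bar> \<le> K * \<bar>s - t\<bar>"
  shows "integrable \<mu> (\<lambda>t. (\<phi> t)\<^sup>2)"
proof -
  interpret prob_space \<mu> by fact
  have idm[measurable]: "(\<lambda>t::real. t) \<in> borel_measurable \<mu>"
    by (subst measurable_cong_sets[OF S refl]) simp
  have c: "integrable \<mu> (\<lambda>t. (\<phi> 0)\<^sup>2)" by simp
  have k: "integrable \<mu> (\<lambda>t. (K * t)\<^sup>2)" using sq_integrable_scale[OF m2] .
  have "integrable \<mu> (\<lambda>t. (\<phi> 0 + K * t)\<^sup>2)" by (rule sq_integrable_add) (use c k in auto)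
  show ?thesis
  proof (rule Bochner_Integration.integrable_bound[where f="\<lambda>t. 2 * (\<phi> 0)\<^sup>2 + 2 * (K * t)\<^sup>2"])
    show "integrable \<mu> (\<lambda>t. 2 * (\<phi> 0)\<^sup>2 + 2 * (K * t)\<^sup>2)" using c k by auto
    show "AE x in \<mu>. norm ((\<phi> x)\<^sup>2) \<le> norm (2 * (\<phi> 0)\<^sup>2 + 2 * (K * x)\<^sup>2)"
    proof (rule AE_I2)
      fix x
      have "\<bar>\<phi> x - \<phi> 0\<bar> \<le> \<bar>K * x\<bar>" using L[of x 0]
        by (metis abs_ge_self abs_mult diff_zero order_trans mult_right_mono abs_ge_zero)
      then have "\<bar>\<phi> x\<bar> \<le> \<bar>\<phi> 0\<bar> + \<bar>K * x\<bar>" by linarith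
      then have "(\<phi> x)\<^sup>2 \<le> (\<bar>\<phi> 0\<bar> + \<bar>K * x\<bar>)\<^sup>2"
        by (metis abs_ge_zero abs_le_square_iff abs_of_nonneg add_nonneg_nonneg)
      also have "\<dots> \<le> 2 * (\<phi> 0)\<^sup>2 + 2 * (K * x)\<^sup>2"
      proof -
        have "0 \<le> (\<bar>\<phi> 0\<bar> - \<bar>K * x\<bar>)\<^sup>2" by simp
        then show ?thesis by (simp add: power2_eq_square algebra_simps)
      qed
      finally show "norm ((\<phi> x)\<^sup>2) \<le> norm (2 * (\<phi> 0)\<^sup>2 + 2 * (K * x)\<^sup>2)" by simp
    qed
  qed simp
qed

lemma sv_var:
  fixes \<mu> :: "real measure" and \<phi> :: "real \<Rightarrow> real"
  assumes P: "prob_space \<mu>" and S: "sets \<mu> = sets borel" and m2: "integrable \<mu> (\<lambda>t. t\<^sup>2)"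
    and [measurable]: "\<phi> \<in> borel_measurable \<mu>"
    and L: "\<And>s t. \<bar>\<phi> s - \<phi> t\<bar> \<le> K * \<bar>s - t\<bar>"
  shows "prob_space.variance \<mu> \<phi> \<le> K\<^sup>2 * prob_space.variance \<mu> (\<lambda>t. t)"
proof -
  interpret prob_space \<mu> by fact
  have idm[measurable]: "(\<lambda>t::real. t) \<in> borel_measurable \<mu>"
    by (subst measurable_cong_sets[OF S refl]) simp
  have sq: "integrable \<mu> (\<lambda>t. (\<phi> t)\<^sup>2)" by (rule sv_sq_integrable[OF P S m2 _ L]) simp
  let ?m = "expectation (\<lambda>t. t)"
  have i1: "integrable \<mu> (\<lambda>t. (\<phi> t - \<phi> ?m)\<^sup>2)"
    by (rule sq_integrable_diff) (use sq in auto)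
  have i2: "integrable \<mu> (\<lambda>t. (t - ?m)\<^sup>2)"
    by (rule sq_integrable_diff) (use m2 in auto)
  have "variance \<phi> \<le> (\<integral>t. (\<phi> t - \<phi> ?m)\<^sup>2 \<partial>\<mu>)"
    by (rule var_le_shift) (use sq in auto)
  also have "\<dots> \<le> (\<integral>t. K\<^sup>2 * (t - ?m)\<^sup>2 \<partial>\<mu>)"
  proof (rule integral_mono)
    show "integrable \<mu> (\<lambda>t. K\<^sup>2 * (t - ?m)\<^sup>2)" using i2 by simp
    fix t
    have "\<bar>\<phi> t - \<phi> ?m\<bar> \<le> K * \<bar>t - ?m\<bar>" by (rule L)
    then have "\<bar>\<phi> t - \<phi> ?m\<bar>\<^sup>2 \<le> (K * \<bar>t - ?m\<bar>)\<^sup>2"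
      by (rule power_mono) simp
    then show "(\<phi> t - \<phi> ?m)\<^sup>2 \<le> K\<^sup>2 * (t - ?m)\<^sup>2" by (simp add: power_mult_distrib)
  qed (use i1 in auto)
  also have "\<dots> = K\<^sup>2 * variance (\<lambda>t. t)" by simp
  finally show ?thesis .
qed

lemma efron_stein:
  fixes \<mu> :: "'i \<Rightarrow> real measure" and K :: "'i \<Rightarrow> real"
  assumes fin: "finite I" and P: "\<And>i. prob_space (\<mu> i)" and S: "\<And>i. sets (\<mu> i) = sets borel"
    and m2: "\<And>i. integrable (\<mu> i) (\<lambda>t. t\<^sup>2)"
  shows "f \<in> borel_measurable (PiM I \<mu>) \<Longrightarrow>
    (\<And>x i t. x \<in> space (PiM I \<mu>) \<Longrightarrow> i \<in> I \<Longrightarrow> \<bar>f (x(i:=t)) - f x\<bar> \<le> K i * \<bar>t - x i\<bar>) \<Longrightarrow>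
    \<exists>c. (\<integral>\<^sup>+x. ennreal ((f x - c)\<^sup>2) \<partial>PiM I \<mu>) \<le> ennreal (\<Sum>i\<in>I. (K i)\<^sup>2 * prob_space.variance (\<mu> i) (\<lambda>t. t))"
  using fin
proof (induction I arbitrary: f rule: finite_induct)
  case empty
  show ?case
    by (rule exI[of _ "f (\<lambda>_. undefined)"]) (simp add: PiM_empty nn_integral_count_space_finite)
next
  case (insert i I f)
  interpret product_sigma_finite \<mu>
    by (simp add: product_sigma_finite_def prob_space_imp_sigma_finite P)
  interpret Mi: prob_space "\<mu> i" by (rule P)
  interpret PI: prob_space "PiM I \<mu>" by (rule prob_space_PiM) (simp add: P)
  note fm[measurable] = insert.prems(1)
  have sp: "\<And>j. space (\<mu> j) = UNIV" using sets_eq_imp_space_eq[OF S] by simp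
  let ?F = "\<lambda>x t. f (x(i := t))"
  have Fm: "(\<lambda>t. ?F x t) \<in> borel_measurable (\<mu> i)" if "x \<in> space (PiM I \<mu>)" for x
    using measurable_comp[OF measurable_component_update[OF that insert.hyps(2)] fm]
    by (simp add: comp_def)
  have FL: "\<bar>?F x t - ?F x s\<bar> \<le> K i * \<bar>t - s\<bar>" if x: "x \<in> space (PiM I \<mu>)" for x s t
  proof -
    have "x(i := s) \<in> space (PiM (insert i I) \<mu>)"
      using x sp by (auto simp: space_PiM PiE_def extensional_def)
    then have "\<bar>f (x(i := s, i := t)) - f (x(i := s))\<bar> \<le> K i * \<bar>t - (x(i := s)) i\<bar>"
      by (rule insert.prems(2)) simp
    then show ?thesis by (simp only: fun_upd_upd fun_upd_same)
  qed
  define g where "g x = (\<integral>t. ?F x t \<partial>\<mu> i)" for x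
  have gm[measurable]: "g \<in> borel_measurable (PiM I \<mu>)"
  proof -
    have "(\<lambda>(x, t). f (x(i := t))) \<in> borel_measurable (PiM I \<mu> \<Otimes>\<^sub>M \<mu> i)"
      using measurable_comp[OF measurable_add_dim fm] by (simp add: comp_def case_prod_beta)
    then show ?thesis unfolding g_def
      by (rule sigma_finite_measure.borel_measurable_lebesgue_integral[OF prob_space_imp_sigma_finite[OF P],
           where f="\<lambda>x t. f (x(i := t))"])
  qed
  have Fint: "integrable (\<mu> i) (\<lambda>t. ?F x t)" if "x \<in> space (PiM I \<mu>)" for x
    using sv_sq_integrable[OF P S m2 Fm[OF that] FL[OF that]]
    by (intro Mi.square_integrable_imp_integrable[OF Fm[OF that]])
  have gL: "\<bar>g (x(j:=s)) - g x\<bar> \<le> K j * \<bar>s - x j\<bar>"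
    if x: "x \<in> space (PiM I \<mu>)" and j: "j \<in> I" for x j s
  proof -
    have xj: "x(j := s) \<in> space (PiM I \<mu>)"
      using x j sp by (auto simp: space_PiM PiE_def extensional_def)
    have ij: "i \<noteq> j" using j insert.hyps(2) by auto
    have "g (x(j:=s)) - g x = (\<integral>t. ?F (x(j:=s)) t - ?F x t \<partial>\<mu> i)"
      unfolding g_def using Fint[OF x] Fint[OF xj] by simp
    also have "\<bar>\<dots>\<bar> \<le> (\<integral>t. K j * \<bar>s - x j\<bar> \<partial>\<mu> i)"
    proof (rule integral_abs_bound_integral)
      show "integrable (\<mu> i) (\<lambda>t. ?F (x(j:=s)) t - ?F x t)" using Fint[OF x] Fint[OF xj] by simp
      show "integrable (\<mu> i) (\<lambda>t. K j * \<bar>s - x j\<bar>)" by simp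
      fix t
      have "x(i := t) \<in> space (PiM (insert i I) \<mu>)"
        using x sp by (auto simp: space_PiM PiE_def extensional_def)
      then have h: "\<bar>f (x(i := t, j := s)) - f (x(i := t))\<bar> \<le> K j * \<bar>s - (x(i := t)) j\<bar>"
        by (rule insert.prems(2)) (use j in simp)
      have e1: "x(j := s, i := t) = x(i := t, j := s)" using ij by (rule fun_upd_twist[symmetric])
      have e2: "(x(i := t)) j = x j" using ij by simp
      show "\<bar>?F (x(j:=s)) t - ?F x t\<bar> \<le> K j * \<bar>s - x j\<bar>"
        using h by (simp only: e1 e2)
    qed
    also have "\<dots> = K j * \<bar>s - x j\<bar>" by (simp add: Mi.prob_space)
    finally show ?thesis .
  qed
  from insert.IH[OF gm gL] obtain c where
    c: "(\<integral>\<^sup>+x. ennreal ((g x - c)\<^sup>2) \<partial>PiM I \<mu>) \<le> ennreal (\<Sum>j\<in>I. (K j)\<^sup>2 * prob_space.variance (\<mu> j) (\<lambda>t. t))"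
    by blast
  let ?V = "(K i)\<^sup>2 * Mi.variance (\<lambda>t. t)"
  have V0: "0 \<le> ?V" by (simp add: Mi.variance_positive)
  have inner: "(\<integral>\<^sup>+t. ennreal ((?F x t - c)\<^sup>2) \<partial>\<mu> i) \<le> ennreal ?V + ennreal ((g x - c)\<^sup>2)"
    if x: "x \<in> space (PiM I \<mu>)" for x
  proof -
    have sq: "integrable (\<mu> i) (\<lambda>t. (?F x t)\<^sup>2)" by (rule sv_sq_integrable[OF P S m2 Fm[OF x] FL[OF x]])
    have sqc: "integrable (\<mu> i) (\<lambda>t. (?F x t - c)\<^sup>2)"
      by (rule sq_integrable_diff) (use sq Fm[OF x] in auto)
    have "(\<integral>\<^sup>+t. ennreal ((?F x t - c)\<^sup>2) \<partial>\<mu> i) = ennreal (\<integral>t. (?F x t - c)\<^sup>2 \<partial>\<mu> i)"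
      by (rule nn_integral_eq_integral) (use sqc in auto)
    also have "(\<integral>t. (?F x t - c)\<^sup>2 \<partial>\<mu> i) = Mi.variance (?F x) + (g x - c)\<^sup>2"
      unfolding g_def by (rule Mi.var_shift) (use sq Fm[OF x] in auto)
    also have "ennreal (Mi.variance (?F x) + (g x - c)\<^sup>2) \<le> ennreal (?V + (g x - c)\<^sup>2)"
      using sv_var[OF P S m2 Fm[OF x] FL[OF x]] by (intro ennreal_leI) simp
    also have "\<dots> = ennreal ?V + ennreal ((g x - c)\<^sup>2)"
      by (rule ennreal_plus) (use V0 in simp_all)
    finally show ?thesis .
  qed
  show ?case
  proof (rule exI[of _ c])
    have "(\<integral>\<^sup>+x. ennreal ((f x - c)\<^sup>2) \<partial>PiM (insert i I) \<mu>)
        = (\<integral>\<^sup>+x. (\<integral>\<^sup>+t. ennreal ((?F x t - c)\<^sup>2) \<partial>\<mu> i) \<partial>PiM I \<mu>)"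
      by (rule product_nn_integral_insert) (use insert.hyps in auto)
    also have "\<dots> \<le> (\<integral>\<^sup>+x. ennreal ?V + ennreal ((g x - c)\<^sup>2) \<partial>PiM I \<mu>)"
      by (rule nn_integral_mono) (rule inner)
    also have "\<dots> = ennreal ?V + (\<integral>\<^sup>+x. ennreal ((g x - c)\<^sup>2) \<partial>PiM I \<mu>)"
      by (subst nn_integral_add) (auto simp: PI.emeasure_space_1)
    also have "\<dots> \<le> ennreal ?V + ennreal (\<Sum>j\<in>I. (K j)\<^sup>2 * prob_space.variance (\<mu> j) (\<lambda>t. t))"
      using c by (rule add_left_mono)
    also have "\<dots> = ennreal (\<Sum>j\<in>insert i I. (K j)\<^sup>2 * prob_space.variance (\<mu> j) (\<lambda>t. t))"
    proof -
      have s0: "0 \<le> (\<Sum>j\<in>I. (K j)\<^sup>2 * prob_space.variance (\<mu> j) (\<lambda>t. t))"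
        by (intro sum_nonneg mult_nonneg_nonneg prob_space.variance_positive P) simp
      have "ennreal ?V + ennreal (\<Sum>j\<in>I. (K j)\<^sup>2 * prob_space.variance (\<mu> j) (\<lambda>t. t))
          = ennreal (?V + (\<Sum>j\<in>I. (K j)\<^sup>2 * prob_space.variance (\<mu> j) (\<lambda>t. t)))"
        by (rule ennreal_plus[symmetric]) (use V0 s0 in simp_all)
      also have "?V + (\<Sum>j\<in>I. (K j)\<^sup>2 * prob_space.variance (\<mu> j) (\<lambda>t. t))
          = (\<Sum>j\<in>insert i I. (K j)\<^sup>2 * prob_space.variance (\<mu> j) (\<lambda>t. t))"
        using insert.hyps by simp
      finally show ?thesis .
    qed
    finally show "(\<integral>\<^sup>+x. ennreal ((f x - c)\<^sup>2) \<partial>PiM (insert i I) \<mu>)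
        \<le> ennreal (\<Sum>j\<in>insert i I. (K j)\<^sup>2 * prob_space.variance (\<mu> j) (\<lambda>t. t))" .
  qed
qed


lemma lbint_step_bound:
  fixes f :: "real \<Rightarrow> real" and c :: "nat \<Rightarrow> real" and t :: "nat \<Rightarrow> real"
  assumes le: "b1 \<le> b2"
    and bd: "\<And>x. b1 \<le> x \<Longrightarrow> x \<le> b2 \<Longrightarrow> 0 \<le> f x \<and> f x \<le> (\<Sum>j\<in>S. c j * indicator {t j..t (Suc j)} x)"
    and fin: "finite S" and cs: "\<And>j. j \<in> S \<Longrightarrow> 0 \<le> c j \<and> t j \<le> t (Suc j)"
  shows "0 \<le> (LBINT x=b1..b2. f x) \<and> (LBINT x=b1..b2. f x) \<le> (\<Sum>j\<in>S. c j * (t (Suc j) - t j))"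
proof -
  define F where "F x = indicator {b1..b2} x * f x" for x
  define G where "G x = (\<Sum>j\<in>S. c j * indicator {t j..t (Suc j)} x)" for x :: real
  have eq: "(LBINT x=b1..b2. f x) = integral\<^sup>L lborel F"
    unfolding interval_integral_Icc[OF le] set_lebesgue_integral_def F_def by simp
  have F0: "0 \<le> F x" for x using bd[of x] by (auto simp: F_def indicator_def)
  have G0: "0 \<le> G x" for x unfolding G_def using cs
    by (intro sum_nonneg mult_nonneg_nonneg) (auto simp: indicator_def)
  have FG: "F x \<le> G x" for x using bd[of x] G0[of x] by (auto simp: F_def G_def indicator_def)
  have Gi: "integrable lborel G" unfolding G_def
    by (intro Bochner_Integration.integrable_sum integrable_mult_right integrable_real_indicator) (auto dest: cs simp: emeasure_lborel_Icc)
  have GI: "integral\<^sup>L lborel G = (\<Sum>j\<in>S. c j * (t (Suc j) - t j))"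
    unfolding G_def
    by (subst Bochner_Integration.integral_sum)
      (auto intro!: sum.cong integrable_real_indicator dest: cs simp: emeasure_lborel_Icc measure_lborel_Icc)
  have "integral\<^sup>L lborel F \<le> integral\<^sup>L lborel G"
  proof (cases "integrable lborel F")
    case True
    then show ?thesis by (intro integral_mono Gi FG)
  next
    case False
    then show ?thesis using integral_nonneg_AE[of G lborel] G0 by (simp add: not_integrable_integral_eq)
  qed
  moreover have "0 \<le> integral\<^sup>L lborel F" by (rule integral_nonneg_AE) (simp add: F0)
  ultimately show ?thesis using eq GI by simp
qed


lemma sq_integrable_prod:
  fixes X Y :: "'a \<Rightarrow> real"
  assumes [measurable]: "X \<in> borel_measurable M" "Y \<in> borel_measurable M"
    and sx: "integrable M (\<lambda>x. (X x)\<^sup>2)" and sy: "integrable M (\<lambda>x. (Y x)\<^sup>2)"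
  shows "integrable M (\<lambda>x. X x * Y x)"
proof -
  have "integrable M (\<lambda>x. ((X x + Y x)\<^sup>2 - (X x)\<^sup>2 - (Y x)\<^sup>2) / 2)"
    using sq_integrable_add[OF assms] sx sy by auto
  moreover have "(\<lambda>x. ((X x + Y x)\<^sup>2 - (X x)\<^sup>2 - (Y x)\<^sup>2) / 2) = (\<lambda>x. X x * Y x)"
    by (auto simp: power2_eq_square algebra_simps)
  ultimately show ?thesis by simp
qed

lemma sq_integrable_divide:
  fixes X :: "'a \<Rightarrow> real"
  assumes "integrable M (\<lambda>x. (X x)\<^sup>2)"
  shows "integrable M (\<lambda>x. (X x / h)\<^sup>2)"
  using sq_integrable_scale[OF assms, of "1/h"] by simp

lemma (in prob_space) var_divide:
  fixes X :: "'a \<Rightarrow> real"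
  assumes [measurable]: "X \<in> borel_measurable M" and sx: "integrable M (\<lambda>x. (X x)\<^sup>2)"
  shows "variance (\<lambda>x. X x / h) = variance X / h\<^sup>2"
proof -
  have i: "integrable M X" using square_integrable_imp_integrable[OF _ sx] by simp
  have e: "expectation (\<lambda>x. X x / h) = expectation X / h" by simp
  have "variance (\<lambda>x. X x / h) = (\<integral>x. (X x - expectation X)\<^sup>2 / h\<^sup>2 \<partial>M)"
    unfolding e by (rule Bochner_Integration.integral_cong) (auto simp: power_divide diff_divide_distrib[symmetric])
  also have "\<dots> = variance X / h\<^sup>2" by simp
  finally show ?thesis .
qed

lemma telescope2:
  fixes g :: "nat \<Rightarrow> real"
  assumes "1 \<le> n"
  shows "(\<Sum>j\<in>{1..n}. g (Suc j) - g (j - 1)) = g (Suc n) + g n - g 1 - g 0"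
  using assms
proof (induction n rule: dec_induct)
  case base
  then show ?case by simp
next
  case (step n)
  then show ?case by (simp add: atLeastAtMostSuc_conv)
qed

locale cvx_setup = prob_space M for M :: "'a measure" +
  fixes P a :: "real \<Rightarrow> 'a \<Rightarrow> real" and T V C :: real
  assumes Pm[measurable]: "\<And>\<beta>. P \<beta> \<in> borel_measurable M"
  and am[measurable]: "\<And>\<beta>. a \<beta> \<in> borel_measurable M"
  and Psq: "\<And>\<beta>. 0 \<le> \<beta> \<Longrightarrow> \<beta> \<le> T \<Longrightarrow> integrable M (\<lambda>\<omega>. (P \<beta> \<omega>)\<^sup>2)"
  and asq: "\<And>\<beta>. 0 \<le> \<beta> \<Longrightarrow> \<beta> \<le> T \<Longrightarrow> integrable M (\<lambda>\<omega>. (a \<beta> \<omega>)\<^sup>2)"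
  and chord: "\<And>\<omega> x y. \<omega> \<in> space M \<Longrightarrow> 0 \<le> x \<Longrightarrow> x \<le> T \<Longrightarrow> 0 \<le> y \<Longrightarrow> y \<le> T \<Longrightarrow>
      a x \<omega> * (y - x) \<le> P y \<omega> - P x \<omega>"
  and varP: "\<And>\<beta>. 0 \<le> \<beta> \<Longrightarrow> \<beta> \<le> T \<Longrightarrow> variance (P \<beta>) \<le> V"
  and meanP: "\<And>\<beta>. 0 \<le> \<beta> \<Longrightarrow> \<beta> \<le> T \<Longrightarrow> 0 \<le> expectation (P \<beta>) \<and> expectation (P \<beta>) \<le> C"
begin

lemma amono:
  assumes \<omega>: "\<omega> \<in> space M" and "0 \<le> x" "x \<le> y" "y \<le> T"
  shows "a x \<omega> \<le> a y \<omega>"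
proof (cases "x = y")
  case False
  then have d: "0 < y - x" using assms by simp
  have 1: "a x \<omega> * (y - x) \<le> P y \<omega> - P x \<omega>" by (rule chord) (use assms in auto)
  have 2: "a y \<omega> * (x - y) \<le> P x \<omega> - P y \<omega>" by (rule chord) (use assms in auto)
  have "a x \<omega> * (y - x) \<le> a y \<omega> * (y - x)" using 1 2 by (simp add: algebra_simps)
  then show ?thesis using d by simp
qed simp

lemma Pint: "0 \<le> \<beta> \<Longrightarrow> \<beta> \<le> T \<Longrightarrow> integrable M (P \<beta>)"
  using square_integrable_imp_integrable[OF Pm Psq] by simp

lemma aint: "0 \<le> \<beta> \<Longrightarrow> \<beta> \<le> T \<Longrightarrow> integrable M (a \<beta>)"
  using square_integrable_imp_integrable[OF am asq] by simp

lemma V0: "0 \<le> T \<Longrightarrow> 0 \<le> V"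
proof -
  assume "0 \<le> T"
  have "0 \<le> variance (P 0)" by (rule variance_positive)
  then show ?thesis using varP[of 0] \<open>0 \<le> T\<close> by linarith
qed

lemma C0: "0 \<le> T \<Longrightarrow> 0 \<le> C"
  using meanP[of 0] by simp

end

locale cvx_grid = cvx_setup +
  fixes b1 b2 h :: real and N :: nat
  assumes b1: "0 < b1" and b12: "b1 < b2" and N1: "1 \<le> N" and hdef: "h = (b2 - b1) / real N"
    and h1: "h \<le> b1 / 2" and hT: "b2 + h + 1 \<le> T"
begin

definition t :: "nat \<Rightarrow> real" where "t j = b1 - h + real j * h"
definition D :: "nat \<Rightarrow> 'a \<Rightarrow> real" where "D j \<omega> = (P (t (Suc j)) \<omega> - P (t j) \<omega>) / h"
definition W :: "'a \<Rightarrow> real" where "W \<omega> = D (Suc N) \<omega> - D 0 \<omega>"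
definition e :: "nat \<Rightarrow> 'a \<Rightarrow> real" where "e j \<omega> = D (Suc j) \<omega> - D (j - 1) \<omega>"
definition c :: "nat \<Rightarrow> real" where "c j = 8 * V / h\<^sup>2 + 2 * expectation (\<lambda>\<omega>. e j \<omega> * W \<omega>)"

lemma hpos: "0 < h"
  using b12 N1 by (simp add: hdef)

lemma Nh: "real N * h = b2 - b1"
  using N1 by (simp add: hdef)

lemma T0: "0 \<le> T" using hT b1 b12 hpos by linarith

lemma t0: "0 < t j"
proof -
  have "b1 - h > 0" using h1 b1 by linarith
  moreover have "0 \<le> real j * h" using hpos by simp
  ultimately show ?thesis by (simp add: t_def)
qed

lemma tT: "j \<le> N + 2 \<Longrightarrow> t j \<le> T"
proof -
  assume j: "j \<le> N + 2"
  have "real j * h \<le> real (N + 2) * h" using j hpos by (intro mult_right_mono) auto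
  also have "\<dots> = b2 - b1 + 2 * h" using Nh by (simp add: algebra_simps)
  finally show ?thesis using hT unfolding t_def by linarith
qed

lemma t_Suc: "t (Suc j) - t j = h"
  by (simp add: t_def algebra_simps)

lemma t_mono: "i \<le> k \<Longrightarrow> t i \<le> t k"
  unfolding t_def using hpos by (simp add: mult_right_mono)

lemma Dm[measurable]: "D j \<in> borel_measurable M"
  unfolding D_def[abs_def] by measurable

lemma Wm[measurable]: "W \<in> borel_measurable M"
  unfolding W_def[abs_def] by measurable

lemma em[measurable]: "e j \<in> borel_measurable M"
  unfolding e_def[abs_def] by measurable

lemma Ptsq: "j \<le> N + 2 \<Longrightarrow> integrable M (\<lambda>\<omega>. (P (t j) \<omega>)\<^sup>2)"
  using Psq[of "t j"] t0[of j] tT[of j] by simp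

lemma Dsq: "j \<le> N + 1 \<Longrightarrow> integrable M (\<lambda>\<omega>. (D j \<omega>)\<^sup>2)"
  unfolding D_def
  by (intro sq_integrable_divide sq_integrable_diff Ptsq) auto

lemma Dint: "j \<le> N + 1 \<Longrightarrow> integrable M (D j)"
  using square_integrable_imp_integrable[OF Dm Dsq] by simp

lemma Wsq: "integrable M (\<lambda>\<omega>. (W \<omega>)\<^sup>2)"
  unfolding W_def by (intro sq_integrable_diff Dsq) auto

lemma esq: "j \<le> N \<Longrightarrow> integrable M (\<lambda>\<omega>. (e j \<omega>)\<^sup>2)"
  unfolding e_def by (intro sq_integrable_diff Dsq) auto

lemma eWint: "j \<le> N \<Longrightarrow> integrable M (\<lambda>\<omega>. e j \<omega> * W \<omega>)"
  by (intro sq_integrable_prod esq Wsq) auto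

lemma Dvar: "j \<le> N + 1 \<Longrightarrow> variance (D j) \<le> 4 * V / h\<^sup>2"
proof -
  assume j: "j \<le> N + 1"
  have "variance (D j) = variance (\<lambda>\<omega>. P (t (Suc j)) \<omega> - P (t j) \<omega>) / h\<^sup>2"
    unfolding D_def by (rule var_divide) (use j in \<open>auto intro!: sq_integrable_diff Ptsq\<close>)
  also have "variance (\<lambda>\<omega>. P (t (Suc j)) \<omega> - P (t j) \<omega>) \<le> 2 * variance (P (t (Suc j))) + 2 * variance (P (t j))"
    by (rule var_diff_le) (use j in \<open>auto intro!: Ptsq\<close>)
  also have "\<dots> \<le> 2 * V + 2 * V"
    using varP[of "t (Suc j)"] varP[of "t j"] t0[of j] t0[of "Suc j"] tT[of j] tT[of "Suc j"] j
    by (intro add_mono) auto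
  finally show ?thesis using hpos by (simp add: divide_right_mono)
qed

lemma Da: "\<omega> \<in> space M \<Longrightarrow> j \<le> N + 1 \<Longrightarrow> a (t j) \<omega> \<le> D j \<omega> \<and> D j \<omega> \<le> a (t (Suc j)) \<omega>"
proof -
  assume \<omega>: "\<omega> \<in> space M" and j: "j \<le> N + 1"
  have b: "0 \<le> t j" "t j \<le> T" "0 \<le> t (Suc j)" "t (Suc j) \<le> T"
    using t0[of j] t0[of "Suc j"] tT[of j] tT[of "Suc j"] j by auto
  have 1: "a (t j) \<omega> * (t (Suc j) - t j) \<le> P (t (Suc j)) \<omega> - P (t j) \<omega>"
    by (rule chord) (use \<omega> b in auto)
  have 2: "a (t (Suc j)) \<omega> * (t j - t (Suc j)) \<le> P (t j) \<omega> - P (t (Suc j)) \<omega>"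
    by (rule chord) (use \<omega> b in auto)
  have q1: "a (t j) \<omega> * h \<le> P (t (Suc j)) \<omega> - P (t j) \<omega>" using 1 t_Suc[of j] by simp
  have q2: "P (t (Suc j)) \<omega> - P (t j) \<omega> \<le> a (t (Suc j)) \<omega> * h" using 2 t_Suc[of j] by (simp add: algebra_simps)
  show ?thesis using q1 q2 hpos unfolding D_def by (simp add: field_simps)
qed

lemma Dmono: "\<omega> \<in> space M \<Longrightarrow> i \<le> k \<Longrightarrow> k \<le> N + 1 \<Longrightarrow> D i \<omega> \<le> D k \<omega>"
proof -
  assume \<omega>: "\<omega> \<in> space M" and ik: "i \<le> k" and k: "k \<le> N + 1"
  show ?thesis
  proof (cases "i = k")
    case False
    then have "Suc i \<le> k" using ik by simp
    have "D i \<omega> \<le> a (t (Suc i)) \<omega>" using Da[OF \<omega>, of i] ik k by simp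
    also have "\<dots> \<le> a (t k) \<omega>"
      by (rule amono[OF \<omega>]) (use t0[of "Suc i"] t_mono[OF \<open>Suc i \<le> k\<close>] tT[of k] k in auto)
    also have "\<dots> \<le> D k \<omega>" using Da[OF \<omega>, of k] k by simp
    finally show ?thesis .
  qed simp
qed

lemma W0: "\<omega> \<in> space M \<Longrightarrow> 0 \<le> W \<omega>"
  unfolding W_def using Dmono[of \<omega> 0 "Suc N"] by simp

lemma e0: "\<omega> \<in> space M \<Longrightarrow> j \<le> N \<Longrightarrow> 0 \<le> e j \<omega>"
  unfolding e_def using Dmono[of \<omega> "j - 1" "Suc j"] by simp

lemma eW: "\<omega> \<in> space M \<Longrightarrow> j \<le> N \<Longrightarrow> e j \<omega> \<le> W \<omega>"
proof -
  assume \<omega>: "\<omega> \<in> space M" and j: "j \<le> N"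
  have "D (Suc j) \<omega> \<le> D (Suc N) \<omega>" using Dmono[OF \<omega>, of "Suc j" "Suc N"] j by simp
  moreover have "D 0 \<omega> \<le> D (j - 1) \<omega>" using Dmono[OF \<omega>, of 0 "j - 1"] j by simp
  ultimately show ?thesis unfolding e_def W_def by simp
qed

lemma c0: "j \<le> N \<Longrightarrow> 0 \<le> c j"
proof -
  assume j: "j \<le> N"
  have "0 \<le> expectation (\<lambda>\<omega>. e j \<omega> * W \<omega>)"
    by (rule integral_nonneg_AE) (auto intro!: AE_I2 mult_nonneg_nonneg e0 W0 j)
  then show ?thesis unfolding c_def using V0[OF T0] by simp
qed

lemma K1:
  assumes j: "j \<in> {1..N}" and \<beta>: "t j \<le> \<beta>" "\<beta> \<le> t (Suc j)"
  shows "(\<integral>\<omega>. (a \<beta> \<omega>)\<^sup>2 \<partial>M) - (expectation (a \<beta>))\<^sup>2 \<le> c j"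
proof -
  have jN: "1 \<le> j" "j \<le> N" using j by auto
  have b0: "0 \<le> \<beta>" using t0[of j] \<beta> by simp
  have bT: "\<beta> \<le> T" using tT[of "Suc j"] \<beta> jN by simp
  let ?m = "expectation (D j)"
  have pw: "D (j - 1) \<omega> \<le> a \<beta> \<omega> \<and> a \<beta> \<omega> \<le> D (Suc j) \<omega>" if \<omega>: "\<omega> \<in> space M" for \<omega>
  proof -
    have "D (j - 1) \<omega> \<le> a (t (Suc (j - 1))) \<omega>" using Da[OF \<omega>, of "j - 1"] jN by simp
    also have "t (Suc (j - 1)) = t j" using jN by simp
    also have "a (t j) \<omega> \<le> a \<beta> \<omega>" by (rule amono[OF \<omega>]) (use t0[of j] \<beta> bT in auto)
    finally have 1: "D (j - 1) \<omega> \<le> a \<beta> \<omega>" .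
    have "a \<beta> \<omega> \<le> a (t (Suc j)) \<omega>"
      by (rule amono[OF \<omega>]) (use b0 \<beta> tT[of "Suc j"] jN in auto)
    also have "\<dots> \<le> D (Suc j) \<omega>" using Da[OF \<omega>, of "Suc j"] jN by simp
    finally show ?thesis using 1 by simp
  qed
  have pw2: "(a \<beta> \<omega> - ?m)\<^sup>2 \<le> 2 * (D j \<omega> - ?m)\<^sup>2 + 2 * (e j \<omega> * W \<omega>)" if \<omega>: "\<omega> \<in> space M" for \<omega>
  proof -
    have d1: "D (j - 1) \<omega> \<le> D j \<omega>" using Dmono[OF \<omega>, of "j - 1" j] jN by simp
    have d2: "D j \<omega> \<le> D (Suc j) \<omega>" using Dmono[OF \<omega>, of j "Suc j"] jN by simp
    let ?u = "a \<beta> \<omega> - D j \<omega>"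
    have "\<bar>?u\<bar> \<le> e j \<omega>" using pw[OF \<omega>] d1 d2 unfolding e_def by auto
    then have "?u\<^sup>2 \<le> (e j \<omega>)\<^sup>2" by (metis abs_ge_zero abs_le_square_iff abs_of_nonneg order_trans)
    also have "\<dots> \<le> e j \<omega> * W \<omega>"
      unfolding power2_eq_square by (rule mult_left_mono) (use eW[OF \<omega>] e0[OF \<omega>] jN in auto)
    finally have u: "?u\<^sup>2 \<le> e j \<omega> * W \<omega>" .
    have "(a \<beta> \<omega> - ?m)\<^sup>2 = (?u + (D j \<omega> - ?m))\<^sup>2" by simp
    also have "\<dots> \<le> 2 * ?u\<^sup>2 + 2 * (D j \<omega> - ?m)\<^sup>2"
    proof -
      have "0 \<le> (?u - (D j \<omega> - ?m))\<^sup>2" by simp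
      then show ?thesis by (simp add: power2_eq_square algebra_simps)
    qed
    finally show ?thesis using u by simp
  qed
  have Djsq: "integrable M (\<lambda>\<omega>. (D j \<omega> - ?m)\<^sup>2)"
    by (rule sq_integrable_diff) (use Dsq[of j] jN in auto)
  have "(\<integral>\<omega>. (a \<beta> \<omega>)\<^sup>2 \<partial>M) - (expectation (a \<beta>))\<^sup>2 = variance (a \<beta>)"
    by (rule var_eq_moments) (use asq[OF b0 bT] in auto)
  also have "\<dots> \<le> (\<integral>\<omega>. (a \<beta> \<omega> - ?m)\<^sup>2 \<partial>M)"
    by (rule var_le_shift) (use asq[OF b0 bT] in auto)
  also have "\<dots> \<le> (\<integral>\<omega>. 2 * (D j \<omega> - ?m)\<^sup>2 + 2 * (e j \<omega> * W \<omega>) \<partial>M)"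
  proof (rule integral_mono_AE)
    show "integrable M (\<lambda>\<omega>. (a \<beta> \<omega> - ?m)\<^sup>2)"
      by (rule sq_integrable_diff) (use asq[OF b0 bT] in auto)
    show "integrable M (\<lambda>\<omega>. 2 * (D j \<omega> - ?m)\<^sup>2 + 2 * (e j \<omega> * W \<omega>))"
      using Djsq eWint[of j] jN by auto
    show "AE \<omega> in M. (a \<beta> \<omega> - ?m)\<^sup>2 \<le> 2 * (D j \<omega> - ?m)\<^sup>2 + 2 * (e j \<omega> * W \<omega>)"
      using pw2 by (rule AE_I2)
  qed
  also have "\<dots> = 2 * variance (D j) + 2 * expectation (\<lambda>\<omega>. e j \<omega> * W \<omega>)"
    using Djsq eWint[of j] jN by simp
  also have "\<dots> \<le> 2 * (4 * V / h\<^sup>2) + 2 * expectation (\<lambda>\<omega>. e j \<omega> * W \<omega>)"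
    using Dvar[of j] jN by simp
  also have "\<dots> = c j" unfolding c_def by simp
  finally show ?thesis .
qed

lemma EW_bound: "0 \<le> expectation W \<and> expectation W \<le> C + 2 * C / b1"
proof -
  let ?s = "t (N + 2)"
  have s0: "0 \<le> ?s" using t0 by (intro less_imp_le) simp
  have sT: "?s + 1 \<le> T"
  proof -
    have "?s = b1 - h + real (N + 2) * h" by (simp add: t_def)
    also have "\<dots> = b2 + h" using Nh by (simp add: algebra_simps)
    finally show ?thesis using hT by simp
  qed
  have up: "D (Suc N) \<omega> \<le> P (?s + 1) \<omega> - P ?s \<omega>" if \<omega>: "\<omega> \<in> space M" for \<omega>
  proof -
    have "D (Suc N) \<omega> \<le> a (t (Suc (Suc N))) \<omega>" using Da[OF \<omega>, of "Suc N"] by simp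
    also have "t (Suc (Suc N)) = ?s" by (simp add: numeral_2_eq_2)
    also have "a ?s \<omega> * (?s + 1 - ?s) \<le> P (?s + 1) \<omega> - P ?s \<omega>"
      by (rule chord[OF \<omega>]) (use s0 sT in auto)
    finally show ?thesis by simp
  qed
  have t00: "0 < t 0" by (rule t0)
  have lo: "(P (t 0) \<omega> - P 0 \<omega>) / t 0 \<le> D 0 \<omega>" if \<omega>: "\<omega> \<in> space M" for \<omega>
  proof -
    have "a (t 0) \<omega> * (0 - t 0) \<le> P 0 \<omega> - P (t 0) \<omega>"
      by (rule chord[OF \<omega>]) (use t00 tT[of 0] in auto)
    then have "(P (t 0) \<omega> - P 0 \<omega>) / t 0 \<le> a (t 0) \<omega>" using t00 by (simp add: field_simps)
    also have "\<dots> \<le> D 0 \<omega>" using Da[OF \<omega>, of 0] by simp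
    finally show ?thesis .
  qed
  have i1: "integrable M (P (?s + 1))" "integrable M (P ?s)" "integrable M (P (t 0))" "integrable M (P 0)"
    using Pint s0 sT t00 tT[of 0] T0 by auto
  have "expectation (D (Suc N)) \<le> expectation (\<lambda>\<omega>. P (?s + 1) \<omega> - P ?s \<omega>)"
    by (rule integral_mono_AE) (use Dint[of "Suc N"] i1 up in \<open>auto intro!: AE_I2\<close>)
  also have "\<dots> = expectation (P (?s + 1)) - expectation (P ?s)" using i1 by simp
  also have "\<dots> \<le> C" using meanP[of "?s + 1"] meanP[of ?s] s0 sT by simp
  finally have E1: "expectation (D (Suc N)) \<le> C" .
  have "expectation (\<lambda>\<omega>. (P (t 0) \<omega> - P 0 \<omega>) / t 0) \<le> expectation (D 0)"
    by (rule integral_mono_AE) (use Dint[of 0] i1 lo in \<open>auto intro!: AE_I2\<close>)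
  moreover have "expectation (\<lambda>\<omega>. (P (t 0) \<omega> - P 0 \<omega>) / t 0) = (expectation (P (t 0)) - expectation (P 0)) / t 0"
    using i1 by simp
  moreover have "- C / t 0 \<le> (expectation (P (t 0)) - expectation (P 0)) / t 0"
    using meanP[of "t 0"] meanP[of 0] t00 tT[of 0] T0 by (intro divide_right_mono) auto
  moreover have "- (2 * C / b1) \<le> - C / t 0"
  proof -
    have "b1 / 2 \<le> t 0" using h1 by (simp add: t_def)
    then have "C / t 0 \<le> C / (b1 / 2)" using C0[OF T0] b1 by (intro divide_left_mono) auto
    then have "C / t 0 \<le> C * 2 / b1" by simp
    then have "- (C * 2 / b1) \<le> - (C / t 0)" by linarith
    then show ?thesis by (simp add: mult.commute)
  qed
  ultimately have E0: "- (2 * C / b1) \<le> expectation (D 0)" by linarith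
  have "expectation W = expectation (D (Suc N)) - expectation (D 0)"
    unfolding W_def using Dint[of "Suc N"] Dint[of 0] by simp
  moreover have "0 \<le> expectation W"
    by (rule integral_nonneg_AE) (auto intro!: AE_I2 W0)
  ultimately show ?thesis using E1 E0 by simp
qed

lemma K2: "(\<Sum>j\<in>{1..N}. c j) \<le> 8 * real N * V / h\<^sup>2 + 4 * (16 * V / h\<^sup>2 + (C + 2 * C / b1)\<^sup>2)"
proof -
  have sumc: "(\<Sum>j\<in>{1..N}. c j) = real N * (8 * V / h\<^sup>2) + 2 * expectation (\<lambda>\<omega>. (\<Sum>j\<in>{1..N}. e j \<omega>) * W \<omega>)"
  proof -
    have "(\<Sum>j\<in>{1..N}. c j) = (\<Sum>j\<in>{1..N}. 8 * V / h\<^sup>2) + 2 * (\<Sum>j\<in>{1..N}. expectation (\<lambda>\<omega>. e j \<omega> * W \<omega>))"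
      unfolding c_def by (simp add: sum.distrib sum_distrib_left)
    also have "(\<Sum>j\<in>{1..N}. expectation (\<lambda>\<omega>. e j \<omega> * W \<omega>)) = expectation (\<lambda>\<omega>. \<Sum>j\<in>{1..N}. e j \<omega> * W \<omega>)"
      by (rule Bochner_Integration.integral_sum[symmetric]) (auto intro!: eWint)
    also have "(\<lambda>\<omega>. \<Sum>j\<in>{1..N}. e j \<omega> * W \<omega>) = (\<lambda>\<omega>. (\<Sum>j\<in>{1..N}. e j \<omega>) * W \<omega>)"
      by (simp add: sum_distrib_right)
    finally show ?thesis by simp
  qed
  have tel: "(\<Sum>j\<in>{1..N}. e j \<omega>) \<le> 2 * W \<omega>" if \<omega>: "\<omega> \<in> space M" for \<omega>
  proof -
    have "(\<Sum>j\<in>{1..N}. e j \<omega>) = D (Suc N) \<omega> + D N \<omega> - D 1 \<omega> - D 0 \<omega>"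
      unfolding e_def using telescope2[OF N1, of "\<lambda>j. D j \<omega>"] by simp
    moreover have "D N \<omega> \<le> D (Suc N) \<omega>" using Dmono[OF \<omega>, of N "Suc N"] by simp
    moreover have "D 0 \<omega> \<le> D 1 \<omega>" using Dmono[OF \<omega>, of 0 1] by simp
    ultimately show ?thesis unfolding W_def by simp
  qed
  have sint: "integrable M (\<lambda>\<omega>. (\<Sum>j\<in>{1..N}. e j \<omega>) * W \<omega>)"
  proof -
    have "integrable M (\<lambda>\<omega>. \<Sum>j\<in>{1..N}. e j \<omega> * W \<omega>)"
      by (auto intro!: Bochner_Integration.integrable_sum eWint)
    then show ?thesis by (simp add: sum_distrib_right)
  qed
  have "expectation (\<lambda>\<omega>. (\<Sum>j\<in>{1..N}. e j \<omega>) * W \<omega>) \<le> expectation (\<lambda>\<omega>. 2 * (W \<omega>)\<^sup>2)"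
  proof (rule integral_mono_AE)
    show "integrable M (\<lambda>\<omega>. 2 * (W \<omega>)\<^sup>2)" using Wsq by simp
    show "AE \<omega> in M. (\<Sum>j\<in>{1..N}. e j \<omega>) * W \<omega> \<le> 2 * (W \<omega>)\<^sup>2"
    proof (rule AE_I2)
      fix \<omega> assume \<omega>: "\<omega> \<in> space M"
      have "(\<Sum>j\<in>{1..N}. e j \<omega>) * W \<omega> \<le> (2 * W \<omega>) * W \<omega>"
        by (rule mult_right_mono) (use tel[OF \<omega>] W0[OF \<omega>] in auto)
      then show "(\<Sum>j\<in>{1..N}. e j \<omega>) * W \<omega> \<le> 2 * (W \<omega>)\<^sup>2" by (simp add: power2_eq_square)
    qed
  qed (rule sint)
  also have "\<dots> = 2 * (variance W + (expectation W)\<^sup>2)"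
    using var_shift[OF Wm Wsq, of 0] by simp
  also have "variance W \<le> 16 * V / h\<^sup>2"
  proof -
    have "variance W \<le> 2 * variance (D (Suc N)) + 2 * variance (D 0)"
      unfolding W_def by (rule var_diff_le) (auto intro!: Dsq)
    also have "\<dots> \<le> 2 * (4 * V / h\<^sup>2) + 2 * (4 * V / h\<^sup>2)"
      using Dvar[of "Suc N"] Dvar[of 0] by simp
    finally show ?thesis by simp
  qed
  also have "(expectation W)\<^sup>2 \<le> (C + 2 * C / b1)\<^sup>2"
    using EW_bound by (intro power_mono) auto
  finally have "expectation (\<lambda>\<omega>. (\<Sum>j\<in>{1..N}. e j \<omega>) * W \<omega>) \<le> 2 * (16 * V / h\<^sup>2 + (C + 2 * C / b1)\<^sup>2)"
    by simp
  moreover have "real N * (8 * V / h\<^sup>2) = 8 * real N * V / h\<^sup>2" by simp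
  ultimately show ?thesis unfolding sumc by linarith
qed

theorem grid_bound:
  shows "0 \<le> (LBINT \<beta>=b1..b2. (\<integral>\<omega>. (a \<beta> \<omega>)\<^sup>2 \<partial>M) - (expectation (a \<beta>))\<^sup>2)
    \<and> (LBINT \<beta>=b1..b2. (\<integral>\<omega>. (a \<beta> \<omega>)\<^sup>2 \<partial>M) - (expectation (a \<beta>))\<^sup>2)
        \<le> 8 * (b2 - b1) * V / h\<^sup>2 + 64 * V / h + 4 * h * (C + 2 * C / b1)\<^sup>2"
proof -
  let ?f = "\<lambda>\<beta>. (\<integral>\<omega>. (a \<beta> \<omega>)\<^sup>2 \<partial>M) - (expectation (a \<beta>))\<^sup>2"
  have ex: "\<exists>j\<in>{1..N}. t j \<le> \<beta> \<and> \<beta> \<le> t (Suc j)" if \<beta>: "b1 \<le> \<beta>" "\<beta> \<le> b2" for \<beta>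
  proof -
    define k where "k = nat \<lfloor>(\<beta> - b1) / h\<rfloor>"
    have q0: "0 \<le> (\<beta> - b1) / h" using \<beta> hpos by simp
    have k1: "real k \<le> (\<beta> - b1) / h" unfolding k_def using q0 by linarith
    have k2: "(\<beta> - b1) / h < real k + 1" unfolding k_def using q0 by linarith
    show ?thesis
    proof (cases "k < N")
      case True
      have "t (Suc k) \<le> \<beta>" using k1 hpos by (simp add: t_def field_simps)
      moreover have "\<beta> \<le> t (Suc (Suc k))" using k2 hpos by (simp add: t_def field_simps)
      ultimately show ?thesis using True by (intro bexI[of _ "Suc k"]) auto
    next
      case False
      then have "real N \<le> (\<beta> - b1) / h" using k1 by linarith
      then have "real N * h \<le> \<beta> - b1" using hpos by (simp add: field_simps)
      then have "\<beta> = b2" using Nh \<beta> by simp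
      moreover have "t (Suc N) = b2" using Nh by (simp add: t_def algebra_simps)
      moreover have "t N \<le> t (Suc N)" by (rule t_mono) simp
      ultimately show ?thesis using N1 by (intro bexI[of _ N]) auto
    qed
  qed
  have bd: "0 \<le> ?f \<beta> \<and> ?f \<beta> \<le> (\<Sum>j\<in>{1..N}. c j * indicator {t j..t (Suc j)} \<beta>)"
    if \<beta>: "b1 \<le> \<beta>" "\<beta> \<le> b2" for \<beta>
  proof -
    obtain j where j: "j \<in> {1..N}" "t j \<le> \<beta>" "\<beta> \<le> t (Suc j)" using ex[OF \<beta>] by blast
    have b0: "0 \<le> \<beta>" using \<beta> b1 by simp
    have bT: "\<beta> \<le> T" using \<beta> hT hpos by simp
    have "?f \<beta> = variance (a \<beta>)"
      by (rule var_eq_moments) (use asq[OF b0 bT] in auto)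
    then have "0 \<le> ?f \<beta>" using variance_positive by simp
    moreover have "?f \<beta> \<le> c j * indicator {t j..t (Suc j)} \<beta>" using K1[OF j] j by simp
    moreover have "c j * indicator {t j..t (Suc j)} \<beta> \<le> (\<Sum>j\<in>{1..N}. c j * indicator {t j..t (Suc j)} \<beta>)"
      by (rule member_le_sum) (use j c0 in \<open>auto simp: indicator_def\<close>)
    ultimately show ?thesis by simp
  qed
  have main: "0 \<le> (LBINT \<beta>=b1..b2. ?f \<beta>) \<and> (LBINT \<beta>=b1..b2. ?f \<beta>) \<le> (\<Sum>j\<in>{1..N}. c j * (t (Suc j) - t j))"
    by (rule lbint_step_bound) (use b12 bd c0 t_mono in auto)
  have "(\<Sum>j\<in>{1..N}. c j * (t (Suc j) - t j)) = h * (\<Sum>j\<in>{1..N}. c j)"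
    by (simp add: t_Suc sum_distrib_left mult.commute)
  also have "\<dots> \<le> h * (8 * real N * V / h\<^sup>2 + 4 * (16 * V / h\<^sup>2 + (C + 2 * C / b1)\<^sup>2))"
    using K2 hpos by (intro mult_left_mono) auto
  also have "\<dots> = 8 * (real N * h) * V / h\<^sup>2 + 64 * V / h + 4 * h * (C + 2 * C / b1)\<^sup>2"
    using hpos by (simp add: field_simps power2_eq_square)
  also have "\<dots> = 8 * (b2 - b1) * V / h\<^sup>2 + 64 * V / h + 4 * h * (C + 2 * C / b1)\<^sup>2"
    by (simp add: Nh)
  finally show ?thesis using main by simp
qed

end


lemma lse_pos: "finite S \<Longrightarrow> S \<noteq> {} \<Longrightarrow> 0 < (\<Sum>\<sigma>\<in>S. exp (p \<sigma> :: real))"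
  by (intro sum_pos) auto

lemma lse_mono_shift:
  fixes p q :: "'s \<Rightarrow> real"
  assumes fin: "finite S" and ne: "S \<noteq> {}" and d: "\<And>\<sigma>. \<sigma> \<in> S \<Longrightarrow> p \<sigma> \<le> q \<sigma> + \<delta>"
  shows "ln (\<Sum>\<sigma>\<in>S. exp (p \<sigma>)) \<le> \<delta> + ln (\<Sum>\<sigma>\<in>S. exp (q \<sigma>))"
proof -
  have "(\<Sum>\<sigma>\<in>S. exp (p \<sigma>)) \<le> (\<Sum>\<sigma>\<in>S. exp \<delta> * exp (q \<sigma>))"
    by (intro sum_mono) (use d in \<open>auto simp: exp_add[symmetric] add.commute\<close>)
  also have "\<dots> = exp \<delta> * (\<Sum>\<sigma>\<in>S. exp (q \<sigma>))" by (simp add: sum_distrib_left)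
  finally have "ln (\<Sum>\<sigma>\<in>S. exp (p \<sigma>)) \<le> ln (exp \<delta> * (\<Sum>\<sigma>\<in>S. exp (q \<sigma>)))"
    using lse_pos[OF fin ne] by (subst ln_le_cancel_iff) auto
  also have "\<dots> = \<delta> + ln (\<Sum>\<sigma>\<in>S. exp (q \<sigma>))"
  proof -
    have pq: "0 < (\<Sum>\<sigma>\<in>S. exp (q \<sigma>))" by (rule lse_pos[OF fin ne])
    then show ?thesis by (simp add: ln_mult)
  qed
  finally show ?thesis .
qed

lemma lse_lip:
  fixes p q :: "'s \<Rightarrow> real"
  assumes fin: "finite S" and ne: "S \<noteq> {}" and d: "\<And>\<sigma>. \<sigma> \<in> S \<Longrightarrow> \<bar>p \<sigma> - q \<sigma>\<bar> \<le> \<delta>"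
  shows "\<bar>ln (\<Sum>\<sigma>\<in>S. exp (p \<sigma>)) - ln (\<Sum>\<sigma>\<in>S. exp (q \<sigma>))\<bar> \<le> \<delta>"
proof -
  have "ln (\<Sum>\<sigma>\<in>S. exp (p \<sigma>)) \<le> \<delta> + ln (\<Sum>\<sigma>\<in>S. exp (q \<sigma>))"
    by (rule lse_mono_shift[OF fin ne]) (use d in force)
  moreover have "ln (\<Sum>\<sigma>\<in>S. exp (q \<sigma>)) \<le> \<delta> + ln (\<Sum>\<sigma>\<in>S. exp (p \<sigma>))"
    by (rule lse_mono_shift[OF fin ne]) (use d in force)
  ultimately show ?thesis by linarith
qed

lemma lse_ge:
  fixes p :: "'s \<Rightarrow> real"
  assumes fin: "finite S" and s0: "\<sigma>0 \<in> S"
  shows "p \<sigma>0 \<le> ln (\<Sum>\<sigma>\<in>S. exp (p \<sigma>))"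
proof -
  have "exp (p \<sigma>0) \<le> (\<Sum>\<sigma>\<in>S. exp (p \<sigma>))"
    by (rule member_le_sum) (use fin s0 in auto)
  moreover have "0 < (\<Sum>\<sigma>\<in>S. exp (p \<sigma>))" using fin s0 by (intro sum_pos) auto
  ultimately show ?thesis by (simp add: ln_ge_iff)
qed

lemma lse_abs:
  fixes p :: "'s \<Rightarrow> real"
  assumes fin: "finite S" and ne: "S \<noteq> {}" and d: "\<And>\<sigma>. \<sigma> \<in> S \<Longrightarrow> \<bar>p \<sigma>\<bar> \<le> B"
  shows "\<bar>ln (\<Sum>\<sigma>\<in>S. exp (p \<sigma>))\<bar> \<le> ln (real (card S)) + B"
proof -
  have "\<bar>ln (\<Sum>\<sigma>\<in>S. exp (p \<sigma>)) - ln (\<Sum>\<sigma>\<in>S. exp ((\<lambda>_. 0) \<sigma>))\<bar> \<le> B"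
    by (rule lse_lip[OF fin ne]) (use d in auto)
  moreover have "ln (\<Sum>\<sigma>\<in>S. exp ((\<lambda>_. 0::real) \<sigma>)) = ln (real (card S))" by simp
  moreover have "0 \<le> ln (real (card S))" using fin ne by (simp add: Suc_leI card_gt_0_iff)
  ultimately show ?thesis by linarith
qed

lemma wavg_abs:
  fixes s :: "'s \<Rightarrow> real"
  assumes fin: "finite S" and ne: "S \<noteq> {}" and d: "\<And>\<sigma>. \<sigma> \<in> S \<Longrightarrow> \<bar>s \<sigma>\<bar> \<le> B"
  shows "\<bar>(\<Sum>\<sigma>\<in>S. s \<sigma> * exp (x * s \<sigma>)) / (\<Sum>\<sigma>\<in>S. exp (x * s \<sigma>))\<bar> \<le> B"
proof -
  have Z: "0 < (\<Sum>\<sigma>\<in>S. exp (x * s \<sigma>))" by (rule lse_pos[OF fin ne])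
  have "\<bar>\<Sum>\<sigma>\<in>S. s \<sigma> * exp (x * s \<sigma>)\<bar> \<le> (\<Sum>\<sigma>\<in>S. \<bar>s \<sigma> * exp (x * s \<sigma>)\<bar>)"
    by (rule sum_abs)
  also have "\<dots> \<le> (\<Sum>\<sigma>\<in>S. B * exp (x * s \<sigma>))"
    by (intro sum_mono) (use d in \<open>auto simp: abs_mult intro!: mult_right_mono\<close>)
  also have "\<dots> = B * (\<Sum>\<sigma>\<in>S. exp (x * s \<sigma>))" by (simp add: sum_distrib_left)
  finally show ?thesis using Z by (simp add: divide_le_eq abs_divide)
qed

lemma lse_chord:
  fixes s :: "'s \<Rightarrow> real"
  assumes fin: "finite S" and ne: "S \<noteq> {}"
  shows "(\<Sum>\<sigma>\<in>S. s \<sigma> * exp (x * s \<sigma>)) / (\<Sum>\<sigma>\<in>S. exp (x * s \<sigma>)) * (y - x)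
    \<le> ln (\<Sum>\<sigma>\<in>S. exp (y * s \<sigma>)) - ln (\<Sum>\<sigma>\<in>S. exp (x * s \<sigma>))"
proof -
  define Z where "Z = (\<Sum>\<sigma>\<in>S. exp (x * s \<sigma>))"
  have Z: "0 < Z" unfolding Z_def by (rule lse_pos[OF fin ne])
  define w where "w \<sigma> = exp (x * s \<sigma>) / Z" for \<sigma>
  have w1: "(\<Sum>\<sigma>\<in>S. w \<sigma>) = 1" unfolding w_def using Z by (simp add: sum_divide_distrib[symmetric] Z_def)
  have w0: "\<And>\<sigma>. 0 \<le> w \<sigma>" unfolding w_def using Z by simp
  have "exp (\<Sum>\<sigma>\<in>S. w \<sigma> *\<^sub>R ((y - x) * s \<sigma>)) \<le> (\<Sum>\<sigma>\<in>S. w \<sigma> * exp ((y - x) * s \<sigma>))"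
    by (rule convex_on_sum[OF fin ne exp_convex w1]) (use w0 in auto)
  also have "(\<Sum>\<sigma>\<in>S. w \<sigma> * exp ((y - x) * s \<sigma>)) = (\<Sum>\<sigma>\<in>S. exp (y * s \<sigma>)) / Z"
    unfolding w_def sum_divide_distrib
    by (intro sum.cong refl) (simp add: exp_add[symmetric] algebra_simps)
  also have "(\<Sum>\<sigma>\<in>S. w \<sigma> *\<^sub>R ((y - x) * s \<sigma>)) = (\<Sum>\<sigma>\<in>S. s \<sigma> * exp (x * s \<sigma>)) / Z * (y - x)"
  proof -
    have "(\<Sum>\<sigma>\<in>S. w \<sigma> *\<^sub>R ((y - x) * s \<sigma>)) = (\<Sum>\<sigma>\<in>S. ((y - x) / Z) * (s \<sigma> * exp (x * s \<sigma>)))"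
      unfolding w_def by (intro sum.cong refl) simp
    also have "\<dots> = ((y - x) / Z) * (\<Sum>\<sigma>\<in>S. s \<sigma> * exp (x * s \<sigma>))"
      by (rule sum_distrib_left[symmetric])
    finally show ?thesis by simp
  qed
  finally have "exp ((\<Sum>\<sigma>\<in>S. s \<sigma> * exp (x * s \<sigma>)) / Z * (y - x)) \<le> (\<Sum>\<sigma>\<in>S. exp (y * s \<sigma>)) / Z" .
  then have "(\<Sum>\<sigma>\<in>S. s \<sigma> * exp (x * s \<sigma>)) / Z * (y - x) \<le> ln ((\<Sum>\<sigma>\<in>S. exp (y * s \<sigma>)) / Z)"
    using Z lse_pos[OF fin ne] by (subst ln_ge_iff) auto
  also have "\<dots> = ln (\<Sum>\<sigma>\<in>S. exp (y * s \<sigma>)) - ln Z"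
    using Z lse_pos[OF fin ne, of "\<lambda>\<sigma>. y * s \<sigma>"] by (simp add: ln_div)
  finally show ?thesis unfolding Z_def .
qed


definition xs :: "'i set \<Rightarrow> ('i set \<Rightarrow> real) \<Rightarrow> ('i \<Rightarrow> real) \<Rightarrow> real" where
  "xs L y \<sigma> = (\<Sum>X\<in>Pow L. y X * sigmaX \<sigma> X)"
definition Zf :: "'i set \<Rightarrow> ('i set \<Rightarrow> real) \<Rightarrow> real \<Rightarrow> real" where
  "Zf L y \<beta> = (\<Sum>\<sigma>\<in>configs L. exp (\<beta> * xs L y \<sigma>))"
definition Pf :: "'i set \<Rightarrow> ('i set \<Rightarrow> real) \<Rightarrow> real \<Rightarrow> real" where
  "Pf L y \<beta> = ln (Zf L y \<beta>) / real (card L)"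
definition af :: "'i set \<Rightarrow> ('i set \<Rightarrow> real) \<Rightarrow> real \<Rightarrow> real" where
  "af L y \<beta> = (\<Sum>\<sigma>\<in>configs L. xs L y \<sigma> * exp (\<beta> * xs L y \<sigma>)) / Zf L y \<beta> / real (card L)"

lemma configs_fin: "finite L \<Longrightarrow> finite (configs L)"
  unfolding configs_def by (intro finite_PiE) auto

lemma configs_ne: "configs L \<noteq> {}"
  unfolding configs_def by (simp add: PiE_eq_empty_iff)

lemma card_configs: "finite L \<Longrightarrow> card (configs L) = 2 ^ card L"
  unfolding configs_def by (simp add: card_PiE numeral_2_eq_2)

lemma sigmaX_abs:
  assumes "\<sigma> \<in> configs L" "X \<subseteq> L"
  shows "\<bar>sigmaX \<sigma> X\<bar> \<le> 1"
proof (cases "X = {}")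
  case False
  have "\<bar>\<Prod>i\<in>X. \<sigma> i\<bar> = (\<Prod>i\<in>X. \<bar>\<sigma> i\<bar>)" by (rule abs_prod)
  also have "\<dots> = (\<Prod>i\<in>X. 1)"
    using assms by (intro prod.cong refl) (force simp: configs_def PiE_iff)
  finally show ?thesis using False by (simp add: sigmaX_def)
qed (simp add: sigmaX_def)

lemma Ham_eq: "Ham L y \<sigma> = - xs L y \<sigma>"
  by (simp add: Ham_def xs_def)

lemma partition_eq: "partition_fn L y \<beta> = Zf L y \<beta>"
  by (simp add: partition_fn_def Zf_def Ham_eq)

lemma ie_eq: "internal_energy L y \<beta> / real (card L) = - af L y \<beta>"
  by (simp add: internal_energy_def af_def partition_eq Ham_eq sum_negf Zf_def)

lemma ev_eq: "energy_variance M J L \<beta> =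
   (\<integral>\<omega>. (af L (\<lambda>X. J X \<omega>) \<beta>)\<^sup>2 \<partial>M) - (\<integral>\<omega>. af L (\<lambda>X. J X \<omega>) \<beta> \<partial>M)\<^sup>2"
  unfolding energy_variance_def Let_def ie_eq by simp

lemma Zf_pos: "finite L \<Longrightarrow> 0 < Zf L y \<beta>"
  unfolding Zf_def by (rule lse_pos[OF configs_fin configs_ne])

lemma Pf_chord:
  assumes "finite L"
  shows "af L y x * (z - x) \<le> Pf L y z - Pf L y x"
proof -
  have "(\<Sum>\<sigma>\<in>configs L. xs L y \<sigma> * exp (x * xs L y \<sigma>)) / Zf L y x * (z - x) \<le> ln (Zf L y z) - ln (Zf L y x)"
    unfolding Zf_def by (rule lse_chord[OF configs_fin[OF assms] configs_ne])
  then have "(\<Sum>\<sigma>\<in>configs L. xs L y \<sigma> * exp (x * xs L y \<sigma>)) / Zf L y x * (z - x) / real (card L)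
      \<le> (ln (Zf L y z) - ln (Zf L y x)) / real (card L)"
    by (rule divide_right_mono) simp
  then show ?thesis by (simp add: af_def Pf_def diff_divide_distrib)
qed

lemma xs_abs:
  assumes "\<sigma> \<in> configs L"
  shows "\<bar>xs L y \<sigma>\<bar> \<le> (\<Sum>X\<in>Pow L. \<bar>y X\<bar>)"
proof -
  have "\<bar>xs L y \<sigma>\<bar> \<le> (\<Sum>X\<in>Pow L. \<bar>y X * sigmaX \<sigma> X\<bar>)" unfolding xs_def by (rule sum_abs)
  also have "\<dots> \<le> (\<Sum>X\<in>Pow L. \<bar>y X\<bar>)"
  proof (rule sum_mono)
    fix X assume "X \<in> Pow L"
    then have "\<bar>sigmaX \<sigma> X\<bar> \<le> 1" using sigmaX_abs[OF assms] by simp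
    then show "\<bar>y X * sigmaX \<sigma> X\<bar> \<le> \<bar>y X\<bar>" by (simp add: abs_mult mult_left_le)
  qed
  finally show ?thesis .
qed

lemma Pf_abs:
  assumes fin: "finite L" and b: "0 \<le> \<beta>"
  shows "\<bar>Pf L y \<beta>\<bar> \<le> ln 2 + \<beta> * (\<Sum>X\<in>Pow L. \<bar>y X\<bar>) / real (card L)"
proof (cases "card L = 0")
  case True
  have "0 \<le> \<beta> * (\<Sum>X\<in>Pow L. \<bar>y X\<bar>) / real (card L)" using b by (simp add: sum_nonneg)
  then show ?thesis using True by (simp add: Pf_def)
next
  case False
  have "\<bar>ln (Zf L y \<beta>)\<bar> \<le> ln (real (card (configs L))) + \<beta> * (\<Sum>X\<in>Pow L. \<bar>y X\<bar>)"
    unfolding Zf_def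
  proof (rule lse_abs[OF configs_fin[OF fin] configs_ne])
    fix \<sigma> assume "\<sigma> \<in> configs L"
    then have "\<bar>xs L y \<sigma>\<bar> \<le> (\<Sum>X\<in>Pow L. \<bar>y X\<bar>)" by (rule xs_abs)
    then show "\<bar>\<beta> * xs L y \<sigma>\<bar> \<le> \<beta> * (\<Sum>X\<in>Pow L. \<bar>y X\<bar>)"
      using b by (simp add: abs_mult mult_left_mono)
  qed
  also have "ln (real (card (configs L))) = real (card L) * ln 2"
    by (simp add: card_configs[OF fin] ln_realpow)
  finally have "\<bar>ln (Zf L y \<beta>)\<bar> / real (card L) \<le> (real (card L) * ln 2 + \<beta> * (\<Sum>X\<in>Pow L. \<bar>y X\<bar>)) / real (card L)"
    by (rule divide_right_mono) simp
  then show ?thesis using False by (simp add: Pf_def abs_divide add_divide_distrib)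
qed

lemma af_abs:
  assumes fin: "finite L"
  shows "\<bar>af L y \<beta>\<bar> \<le> (\<Sum>X\<in>Pow L. \<bar>y X\<bar>) / real (card L)"
proof -
  have "\<bar>(\<Sum>\<sigma>\<in>configs L. xs L y \<sigma> * exp (\<beta> * xs L y \<sigma>)) / Zf L y \<beta>\<bar> \<le> (\<Sum>X\<in>Pow L. \<bar>y X\<bar>)"
    unfolding Zf_def by (rule wavg_abs[OF configs_fin[OF fin] configs_ne]) (rule xs_abs)
  then have "\<bar>(\<Sum>\<sigma>\<in>configs L. xs L y \<sigma> * exp (\<beta> * xs L y \<sigma>)) / Zf L y \<beta>\<bar> / real (card L)
     \<le> (\<Sum>X\<in>Pow L. \<bar>y X\<bar>) / real (card L)" by (rule divide_right_mono) simp
  then show ?thesis unfolding af_def by (simp add: abs_divide abs_mult)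
qed

lemma xs_upd:
  assumes "X \<in> Pow L" "finite L"
  shows "xs L (y(X := t)) \<sigma> = xs L y \<sigma> + (t - y X) * sigmaX \<sigma> X"
proof -
  have fin: "finite (Pow L)" using assms by simp
  have "xs L (y(X := t)) \<sigma> = (\<Sum>Z\<in>Pow L. y Z * sigmaX \<sigma> Z + (if Z = X then (t - y X) * sigmaX \<sigma> X else 0))"
    unfolding xs_def by (intro sum.cong refl) (auto simp: algebra_simps)
  also have "\<dots> = xs L y \<sigma> + (t - y X) * sigmaX \<sigma> X"
    using assms fin by (simp add: sum.distrib xs_def)
  finally show ?thesis .
qed

lemma Pf_lip:
  assumes fin: "finite L" and X: "X \<in> Pow L" and b: "0 \<le> \<beta>"
  shows "\<bar>Pf L (y(X := t)) \<beta> - Pf L y \<beta>\<bar> \<le> \<beta> / real (card L) * \<bar>t - y X\<bar>"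
proof -
  have "\<bar>ln (Zf L (y(X := t)) \<beta>) - ln (Zf L y \<beta>)\<bar> \<le> \<beta> * \<bar>t - y X\<bar>"
    unfolding Zf_def
  proof (rule lse_lip[OF configs_fin[OF fin] configs_ne])
    fix \<sigma> assume s: "\<sigma> \<in> configs L"
    have "\<bar>sigmaX \<sigma> X\<bar> \<le> 1" using sigmaX_abs[OF s] X by simp
    then have "\<bar>(t - y X) * sigmaX \<sigma> X\<bar> \<le> \<bar>t - y X\<bar>" by (simp add: abs_mult mult_left_le)
    then have m: "\<beta> * \<bar>(t - y X) * sigmaX \<sigma> X\<bar> \<le> \<beta> * \<bar>t - y X\<bar>"
      using b by (rule mult_left_mono)
    have "\<beta> * xs L (y(X := t)) \<sigma> - \<beta> * xs L y \<sigma> = \<beta> * ((t - y X) * sigmaX \<sigma> X)"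
      by (simp add: xs_upd[OF X fin] algebra_simps)
    then have "\<bar>\<beta> * xs L (y(X := t)) \<sigma> - \<beta> * xs L y \<sigma>\<bar> = \<beta> * \<bar>(t - y X) * sigmaX \<sigma> X\<bar>"
      using b by (simp only: abs_mult abs_of_nonneg)
    then show "\<bar>\<beta> * xs L (y(X := t)) \<sigma> - \<beta> * xs L y \<sigma>\<bar> \<le> \<beta> * \<bar>t - y X\<bar>"
      using m by simp
  qed
  then have "\<bar>ln (Zf L (y(X := t)) \<beta>) - ln (Zf L y \<beta>)\<bar> / real (card L) \<le> \<beta> * \<bar>t - y X\<bar> / real (card L)"
    by (rule divide_right_mono) simp
  then show ?thesis by (simp add: Pf_def diff_divide_distrib[symmetric] abs_divide)
qed

lemma Pf_ge:
  assumes fin: "finite L" and s: "\<sigma>0 \<in> configs L"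
  shows "\<beta> * xs L y \<sigma>0 / real (card L) \<le> Pf L y \<beta>"
proof -
  have "\<beta> * xs L y \<sigma>0 \<le> ln (Zf L y \<beta>)"
    unfolding Zf_def by (rule lse_ge[OF configs_fin[OF fin] s])
  then show ?thesis unfolding Pf_def by (rule divide_right_mono) simp
qed

lemma xs_restrict: "xs L (restrict y (Pow L)) = xs L y"
  by (auto simp: xs_def fun_eq_iff intro!: sum.cong)

lemma Pf_restrict: "Pf L (restrict y (Pow L)) = Pf L y"
  by (simp add: Pf_def Zf_def xs_restrict fun_eq_iff)


lemma normal_mgf_eq:
  assumes s: "0 < \<sigma>"
  shows "normal_density 0 \<sigma> x * exp (u * x) = exp (u\<^sup>2 * \<sigma>\<^sup>2 / 2) * normal_density (u * \<sigma>\<^sup>2) \<sigma> x"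
proof -
  have "- (x - 0)\<^sup>2 / (2 * \<sigma>\<^sup>2) + u * x = u\<^sup>2 * \<sigma>\<^sup>2 / 2 + - (x - u * \<sigma>\<^sup>2)\<^sup>2 / (2 * \<sigma>\<^sup>2)"
    using s by (simp add: field_simps power2_eq_square)
  then have "exp (- (x - 0)\<^sup>2 / (2 * \<sigma>\<^sup>2)) * exp (u * x) = exp (u\<^sup>2 * \<sigma>\<^sup>2 / 2) * exp (- (x - u * \<sigma>\<^sup>2)\<^sup>2 / (2 * \<sigma>\<^sup>2))"
    by (simp add: exp_add[symmetric])
  then show ?thesis unfolding normal_density_def by (simp add: algebra_simps)
qed

lemma normal_mgf:
  assumes s: "0 < \<sigma>"
  shows "integrable lborel (\<lambda>x. normal_density 0 \<sigma> x * exp (u * x))"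
    and "(\<integral>x. normal_density 0 \<sigma> x * exp (u * x) \<partial>lborel) = exp (u\<^sup>2 * \<sigma>\<^sup>2 / 2)"
  unfolding normal_mgf_eq[OF s]
  using integral_normal_density[OF s, of "u * \<sigma>\<^sup>2"] integrable_normal_density[OF s, of "u * \<sigma>\<^sup>2"]
  by simp_all

locale sg = prob_space M for M :: "'a measure" +
  fixes J :: "'i set \<Rightarrow> 'a \<Rightarrow> real" and \<Delta> :: "'i set \<Rightarrow> real"
  assumes indep: "indep_vars (\<lambda>_. borel) J {X. finite X}"
  and D0: "\<And>X. finite X \<Longrightarrow> \<Delta> X \<ge> 0"
  and Dn: "\<And>X. finite X \<Longrightarrow> \<Delta> X > 0 \<Longrightarrow> distributed M lborel (J X) (normal_density 0 (\<Delta> X))"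
  and Dz: "\<And>X. finite X \<Longrightarrow> \<Delta> X = 0 \<Longrightarrow> (AE \<omega> in M. J X \<omega> = 0)"
begin

lemma Jm: "finite X \<Longrightarrow> J X \<in> borel_measurable M"
  using indep unfolding indep_vars_def by auto

lemma J_moments:
  assumes X: "finite X"
  shows "integrable M (J X)" "integrable M (\<lambda>\<omega>. (J X \<omega>)\<^sup>2)"
    "expectation (J X) = 0" "expectation (\<lambda>\<omega>. (J X \<omega>)\<^sup>2) = (\<Delta> X)\<^sup>2"
proof -
  note Jm[OF X, measurable]
  have "integrable M (J X) \<and> integrable M (\<lambda>\<omega>. (J X \<omega>)\<^sup>2) \<and>
    expectation (J X) = 0 \<and> expectation (\<lambda>\<omega>. (J X \<omega>)\<^sup>2) = (\<Delta> X)\<^sup>2"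
  proof (cases "\<Delta> X = 0")
    case True
    have ae: "AE \<omega> in M. J X \<omega> = 0" using Dz[OF X True] .
    have e1: "integral\<^sup>L M (J X) = integral\<^sup>L M (\<lambda>_. 0::real)"
      by (rule integral_cong_AE) (use ae in auto)
    have e2: "(\<integral>\<omega>. (J X \<omega>)\<^sup>2 \<partial>M) = integral\<^sup>L M (\<lambda>_. 0::real)"
      by (rule integral_cong_AE) (use ae in auto)
    have i1: "integrable M (J X)"
      by (rule integrable_cong_AE_imp[where g="\<lambda>_. 0"]) (use ae in auto)
    have i2: "integrable M (\<lambda>\<omega>. (J X \<omega>)\<^sup>2)"
      by (rule integrable_cong_AE_imp[where g="\<lambda>_. 0"]) (use ae in auto)
    show ?thesis using e1 e2 i1 i2 True by simp
  next
    case False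
    then have pos: "0 < \<Delta> X" using D0[OF X] by simp
    have D: "distributed M lborel (J X) (normal_density 0 (\<Delta> X))" by (rule Dn[OF X pos])
    have i1: "integrable M (J X)"
      using distributed_integrable[OF D, of "\<lambda>x. x"] integrable_normal_moment_nz_1[OF pos, of 0] by simp
    have i2: "integrable M (\<lambda>\<omega>. (J X \<omega>)\<^sup>2)"
      using distributed_integrable[OF D, of "\<lambda>x. x\<^sup>2"] integrable_normal_moment[OF pos, of 0 2] by simp
    have e1: "expectation (J X) = 0"
      using distributed_integral[OF D, of "\<lambda>x. x"] integral_normal_moment_nz_1[OF pos, of 0] by simp
    have e2: "expectation (\<lambda>\<omega>. (J X \<omega>)\<^sup>2) = (\<Delta> X)\<^sup>2"
      using distributed_integral[OF D, of "\<lambda>x. x\<^sup>2"] integral_normal_moment_even[OF pos, of 0 1] by simp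
    show ?thesis using i1 i2 e1 e2 by simp
  qed
  then show "integrable M (J X)" "integrable M (\<lambda>\<omega>. (J X \<omega>)\<^sup>2)"
    "expectation (J X) = 0" "expectation (\<lambda>\<omega>. (J X \<omega>)\<^sup>2) = (\<Delta> X)\<^sup>2" by auto
qed

lemma J_mgf:
  assumes X: "finite X"
  shows "integrable M (\<lambda>\<omega>. exp (u * J X \<omega>))" "expectation (\<lambda>\<omega>. exp (u * J X \<omega>)) = exp (u\<^sup>2 * (\<Delta> X)\<^sup>2 / 2)"
proof -
  note Jm[OF X, measurable]
  have "integrable M (\<lambda>\<omega>. exp (u * J X \<omega>)) \<and> expectation (\<lambda>\<omega>. exp (u * J X \<omega>)) = exp (u\<^sup>2 * (\<Delta> X)\<^sup>2 / 2)"
  proof (cases "\<Delta> X = 0")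
    case True
    have ae: "AE \<omega> in M. J X \<omega> = 0" using Dz[OF X True] .
    have e1: "expectation (\<lambda>\<omega>. exp (u * J X \<omega>)) = integral\<^sup>L M (\<lambda>_. 1::real)"
      by (rule integral_cong_AE) (use ae in auto)
    have i1: "integrable M (\<lambda>\<omega>. exp (u * J X \<omega>))"
      by (rule integrable_cong_AE_imp[where g="\<lambda>_. 1"]) (use ae in auto)
    show ?thesis using e1 i1 True by (simp add: prob_space)
  next
    case False
    then have pos: "0 < \<Delta> X" using D0[OF X] by simp
    have D: "distributed M lborel (J X) (normal_density 0 (\<Delta> X))" by (rule Dn[OF X pos])
    have i1: "integrable M (\<lambda>\<omega>. exp (u * J X \<omega>))"
      using distributed_integrable[OF D, of "\<lambda>x. exp (u * x)"] normal_mgf(1)[OF pos, of u] by simp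
    have e1: "expectation (\<lambda>\<omega>. exp (u * J X \<omega>)) = exp (u\<^sup>2 * (\<Delta> X)\<^sup>2 / 2)"
      using distributed_integral[OF D, of "\<lambda>x. exp (u * x)"] normal_mgf(2)[OF pos, of u] by simp
    show ?thesis using i1 e1 by simp
  qed
  then show "integrable M (\<lambda>\<omega>. exp (u * J X \<omega>))" "expectation (\<lambda>\<omega>. exp (u * J X \<omega>)) = exp (u\<^sup>2 * (\<Delta> X)\<^sup>2 / 2)"
    by auto
qed

end


lemma sq_integrable_sum:
  fixes f :: "'i \<Rightarrow> 'a \<Rightarrow> real"
  assumes "finite I" "\<And>i. i \<in> I \<Longrightarrow> f i \<in> borel_measurable M" "\<And>i. i \<in> I \<Longrightarrow> integrable M (\<lambda>x. (f i x)\<^sup>2)"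
  shows "integrable M (\<lambda>x. (\<Sum>i\<in>I. f i x)\<^sup>2)"
  using assms
proof (induction I rule: finite_induct)
  case empty
  then show ?case by simp
next
  case (insert i I)
  have "integrable M (\<lambda>x. (f i x + (\<Sum>i\<in>I. f i x))\<^sup>2)"
    by (rule sq_integrable_add) (use insert in auto)
  then show ?case using insert by simp
qed

locale sgL = sg M J \<Delta> for M :: "'a measure" and J :: "'i set \<Rightarrow> 'a \<Rightarrow> real" and \<Delta> +
  fixes L :: "'i set"
  assumes finL: "finite L" and neL: "L \<noteq> {}"
begin

definition S :: "'a \<Rightarrow> real" where "S \<omega> = (\<Sum>X\<in>Pow L. \<bar>J X \<omega>\<bar>)"
definition R :: "'a \<Rightarrow> ('i set \<Rightarrow> real)" where "R \<omega> = (\<lambda>X\<in>Pow L. J X \<omega>)"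

lemma finPow: "X \<in> Pow L \<Longrightarrow> finite X"
  using finL finite_subset by auto

lemma JmL[measurable]: "X \<in> Pow L \<Longrightarrow> J X \<in> borel_measurable M"
  by (rule Jm) (rule finPow)

lemma cardpos: "0 < card L" using finL neL by (simp add: card_gt_0_iff)

lemma Rm[measurable]: "R \<in> measurable M (PiM (Pow L) (\<lambda>_. borel))"
  unfolding R_def by (rule measurable_restrict) simp

lemma Sm[measurable]: "S \<in> borel_measurable M"
  unfolding S_def[abs_def] by (intro borel_measurable_sum borel_measurable_abs JmL)

lemma Ssq: "integrable M (\<lambda>\<omega>. (S \<omega>)\<^sup>2)"
  unfolding S_def by (rule sq_integrable_sum) (auto intro!: J_moments finPow)

lemma Pf_PiM: "(\<lambda>y. Pf L y \<beta>) \<in> borel_measurable (PiM (Pow L) (\<lambda>_. borel))"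
  unfolding Pf_def Zf_def xs_def by measurable

lemma af_PiM: "(\<lambda>y. af L y \<beta>) \<in> borel_measurable (PiM (Pow L) (\<lambda>_. borel))"
  unfolding af_def Zf_def xs_def by measurable

lemma af_restrict: "af L (restrict y (Pow L)) = af L y"
  by (simp add: af_def Zf_def xs_restrict fun_eq_iff)

lemma R_eq: "R \<omega> = restrict (\<lambda>X. J X \<omega>) (Pow L)"
  by (simp add: R_def)

lemma PM[measurable]: "(\<lambda>\<omega>. Pf L (\<lambda>X. J X \<omega>) \<beta>) \<in> borel_measurable M"
proof -
  have "(\<lambda>\<omega>. Pf L (R \<omega>) \<beta>) \<in> borel_measurable M"
    using measurable_comp[OF Rm Pf_PiM] by (simp add: comp_def)
  then show ?thesis by (simp add: R_eq Pf_restrict)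
qed

lemma aM[measurable]: "(\<lambda>\<omega>. af L (\<lambda>X. J X \<omega>) \<beta>) \<in> borel_measurable M"
proof -
  have "(\<lambda>\<omega>. af L (R \<omega>) \<beta>) \<in> borel_measurable M"
    using measurable_comp[OF Rm af_PiM] by (simp add: comp_def)
  then show ?thesis by (simp add: R_eq af_restrict)
qed

lemma P_sq: "0 \<le> \<beta> \<Longrightarrow> integrable M (\<lambda>\<omega>. (Pf L (\<lambda>X. J X \<omega>) \<beta>)\<^sup>2)"
proof -
  assume b: "0 \<le> \<beta>"
  have bi: "integrable M (\<lambda>\<omega>. (ln 2 + \<beta> / real (card L) * S \<omega>)\<^sup>2)"
  proof -
    have s1: "integrable M (\<lambda>\<omega>. (\<beta> / real (card L) * S \<omega>)\<^sup>2)" by (rule sq_integrable_scale) (rule Ssq)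
    show ?thesis by (rule sq_integrable_add[OF _ _ _ s1]) auto
  qed
  show ?thesis
  proof (rule Bochner_Integration.integrable_bound[OF bi])
    show "AE \<omega> in M. norm ((Pf L (\<lambda>X. J X \<omega>) \<beta>)\<^sup>2) \<le> norm ((ln 2 + \<beta> / real (card L) * S \<omega>)\<^sup>2)"
    proof (rule AE_I2)
      fix \<omega>
      have "\<bar>Pf L (\<lambda>X. J X \<omega>) \<beta>\<bar> \<le> ln 2 + \<beta> / real (card L) * S \<omega>"
        using Pf_abs[OF finL b, of "\<lambda>X. J X \<omega>"] by (simp add: S_def)
      then have "(Pf L (\<lambda>X. J X \<omega>) \<beta>)\<^sup>2 \<le> (ln 2 + \<beta> / real (card L) * S \<omega>)\<^sup>2"
        by (metis abs_ge_zero abs_le_square_iff abs_of_nonneg order_trans)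
      then show "norm ((Pf L (\<lambda>X. J X \<omega>) \<beta>)\<^sup>2) \<le> norm ((ln 2 + \<beta> / real (card L) * S \<omega>)\<^sup>2)"
        by simp
    qed
  qed simp
qed

lemma a_sq: "integrable M (\<lambda>\<omega>. (af L (\<lambda>X. J X \<omega>) \<beta>)\<^sup>2)"
proof -
  have bi: "integrable M (\<lambda>\<omega>. (1 / real (card L) * S \<omega>)\<^sup>2)"
    by (rule sq_integrable_scale) (rule Ssq)
  show ?thesis
  proof (rule Bochner_Integration.integrable_bound[OF bi])
    show "AE \<omega> in M. norm ((af L (\<lambda>X. J X \<omega>) \<beta>)\<^sup>2) \<le> norm ((1 / real (card L) * S \<omega>)\<^sup>2)"
    proof (rule AE_I2)
      fix \<omega>
      have "\<bar>af L (\<lambda>X. J X \<omega>) \<beta>\<bar> \<le> 1 / real (card L) * S \<omega>"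
        using af_abs[OF finL, of "\<lambda>X. J X \<omega>" \<beta>] by (simp add: S_def)
      then have "(af L (\<lambda>X. J X \<omega>) \<beta>)\<^sup>2 \<le> (1 / real (card L) * S \<omega>)\<^sup>2"
        by (metis abs_ge_zero abs_le_square_iff abs_of_nonneg order_trans)
      then show "norm ((af L (\<lambda>X. J X \<omega>) \<beta>)\<^sup>2) \<le> norm ((1 / real (card L) * S \<omega>)\<^sup>2)"
        by simp
    qed
  qed simp
qed

lemma P_var:
  assumes b: "0 \<le> \<beta>"
  shows "variance (\<lambda>\<omega>. Pf L (\<lambda>X. J X \<omega>) \<beta>) \<le> (\<beta> / real (card L))\<^sup>2 * (\<Sum>X\<in>Pow L. (\<Delta> X)\<^sup>2)"
proof -
  define \<mu> where "\<mu> X = (if X \<in> Pow L then distr M borel (J X) else distr M borel (J {}))" for X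
  have \<mu>P: "prob_space (\<mu> X)" for X
    unfolding \<mu>_def by (auto intro!: prob_space_distr Jm finPow)
  have \<mu>S: "sets (\<mu> X) = sets borel" for X
    unfolding \<mu>_def by simp
  have \<mu>2: "integrable (\<mu> X) (\<lambda>t. t\<^sup>2)" for X
    unfolding \<mu>_def by (auto simp: integrable_distr_eq intro!: J_moments finPow)
  have \<mu>V: "prob_space.variance (\<mu> X) (\<lambda>t. t) = (\<Delta> X)\<^sup>2" if X: "X \<in> Pow L" for X
  proof -
    have e: "(\<integral>t. t \<partial>\<mu> X) = 0"
      unfolding \<mu>_def using X J_moments(3)[OF finPow[OF X]] by (simp add: integral_distr)
    have "(\<integral>t. (t - (\<integral>t. t \<partial>\<mu> X))\<^sup>2 \<partial>\<mu> X) = (\<integral>t. t\<^sup>2 \<partial>\<mu> X)" by (simp add: e)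
    also have "\<dots> = (\<Delta> X)\<^sup>2"
      unfolding \<mu>_def using X J_moments(4)[OF finPow[OF X]] by (simp add: integral_distr)
    finally show ?thesis .
  qed
  have PiEq: "PiM (Pow L) \<mu> = PiM (Pow L) (\<lambda>X. distr M borel (J X))"
    by (rule PiM_cong) (auto simp: \<mu>_def)
  have ind: "indep_vars (\<lambda>_. borel) J (Pow L)"
    by (rule indep_vars_subset[OF indep]) (auto intro: finPow)
  have distrR: "distr M (PiM (Pow L) (\<lambda>_. borel)) R = PiM (Pow L) (\<lambda>X. distr M borel (J X))"
    using indep_vars_iff_distr_eq_PiM'[where I="Pow L" and X=J and M'="\<lambda>_. borel"] ind
    unfolding R_def by auto
  define f where "f y = Pf L y \<beta>" for y
  have setsEq: "sets (PiM (Pow L) \<mu>) = sets (PiM (Pow L) (\<lambda>_. borel))"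
    by (rule sets_PiM_cong) (auto simp: \<mu>S)
  have fm: "f \<in> borel_measurable (PiM (Pow L) \<mu>)"
    unfolding f_def using Pf_PiM measurable_cong_sets[OF setsEq refl] by blast
  have fL: "\<bar>f (x(X := t)) - f x\<bar> \<le> \<beta> / real (card L) * \<bar>t - x X\<bar>"
    if "x \<in> space (PiM (Pow L) \<mu>)" "X \<in> Pow L" for x X t
    unfolding f_def by (rule Pf_lip[OF finL that(2) b])
  obtain c where c: "(\<integral>\<^sup>+y. ennreal ((f y - c)\<^sup>2) \<partial>PiM (Pow L) \<mu>)
      \<le> ennreal (\<Sum>X\<in>Pow L. (\<beta> / real (card L))\<^sup>2 * prob_space.variance (\<mu> X) (\<lambda>t. t))"
    using efron_stein[of "Pow L" \<mu> f "\<lambda>_. \<beta> / real (card L)", OF _ \<mu>P \<mu>S \<mu>2 fm fL] finL by auto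
  have sumEq: "(\<Sum>X\<in>Pow L. (\<beta> / real (card L))\<^sup>2 * prob_space.variance (\<mu> X) (\<lambda>t. t))
      = (\<beta> / real (card L))\<^sup>2 * (\<Sum>X\<in>Pow L. (\<Delta> X)\<^sup>2)"
    by (simp add: \<mu>V sum_distrib_left)
  have fmB: "(\<lambda>y. ennreal ((f y - c)\<^sup>2)) \<in> borel_measurable (PiM (Pow L) (\<lambda>_. borel))"
    unfolding f_def using Pf_PiM by measurable
  have "(\<integral>\<^sup>+y. ennreal ((f y - c)\<^sup>2) \<partial>PiM (Pow L) \<mu>)
      = (\<integral>\<^sup>+y. ennreal ((f y - c)\<^sup>2) \<partial>distr M (PiM (Pow L) (\<lambda>_. borel)) R)"
    by (simp add: PiEq distrR)
  also have "\<dots> = (\<integral>\<^sup>+\<omega>. ennreal ((f (R \<omega>) - c)\<^sup>2) \<partial>M)"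
    by (rule nn_integral_distr[OF Rm]) (use fmB in simp)
  also have "\<dots> = (\<integral>\<^sup>+\<omega>. ennreal ((Pf L (\<lambda>X. J X \<omega>) \<beta> - c)\<^sup>2) \<partial>M)"
    by (simp add: f_def R_eq Pf_restrict)
  also have "\<dots> = ennreal (\<integral>\<omega>. (Pf L (\<lambda>X. J X \<omega>) \<beta> - c)\<^sup>2 \<partial>M)"
    by (rule nn_integral_eq_integral) (auto intro!: sq_integrable_diff P_sq b)
  finally have "ennreal (\<integral>\<omega>. (Pf L (\<lambda>X. J X \<omega>) \<beta> - c)\<^sup>2 \<partial>M)
     \<le> ennreal ((\<beta> / real (card L))\<^sup>2 * (\<Sum>X\<in>Pow L. (\<Delta> X)\<^sup>2))"
    using c sumEq by simp
  then have "(\<integral>\<omega>. (Pf L (\<lambda>X. J X \<omega>) \<beta> - c)\<^sup>2 \<partial>M) \<le> (\<beta> / real (card L))\<^sup>2 * (\<Sum>X\<in>Pow L. (\<Delta> X)\<^sup>2)"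
    by (subst (asm) ennreal_le_iff) (auto intro!: sum_nonneg mult_nonneg_nonneg)
  moreover have "variance (\<lambda>\<omega>. Pf L (\<lambda>X. J X \<omega>) \<beta>) \<le> (\<integral>\<omega>. (Pf L (\<lambda>X. J X \<omega>) \<beta> - c)\<^sup>2 \<partial>M)"
    by (rule var_le_shift) (auto intro!: P_sq b)
  ultimately show ?thesis by linarith
qed

lemma P_int: "0 \<le> \<beta> \<Longrightarrow> integrable M (\<lambda>\<omega>. Pf L (\<lambda>X. J X \<omega>) \<beta>)"
  using square_integrable_imp_integrable[OF PM P_sq] by simp

lemma xs_int: "integrable M (\<lambda>\<omega>. xs L (\<lambda>X. J X \<omega>) \<sigma>)"
  unfolding xs_def by (auto intro!: Bochner_Integration.integrable_sum J_moments finPow)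

lemma xs_mean: "expectation (\<lambda>\<omega>. xs L (\<lambda>X. J X \<omega>) \<sigma>) = 0"
  unfolding xs_def
  by (subst Bochner_Integration.integral_sum) (auto intro!: J_moments finPow simp: J_moments(3)[OF finPow])

lemma P_mean_lower:
  assumes b: "0 \<le> \<beta>"
  shows "0 \<le> expectation (\<lambda>\<omega>. Pf L (\<lambda>X. J X \<omega>) \<beta>)"
proof -
  define \<sigma>0 where "\<sigma>0 = restrict (\<lambda>_. 1::real) L"
  have s0: "\<sigma>0 \<in> configs L" by (simp add: \<sigma>0_def configs_def)
  have "expectation (\<lambda>\<omega>. \<beta> / real (card L) * xs L (\<lambda>X. J X \<omega>) \<sigma>0) \<le> expectation (\<lambda>\<omega>. Pf L (\<lambda>X. J X \<omega>) \<beta>)"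
  proof (rule integral_mono)
    show "integrable M (\<lambda>\<omega>. \<beta> / real (card L) * xs L (\<lambda>X. J X \<omega>) \<sigma>0)" using xs_int by simp
    show "integrable M (\<lambda>\<omega>. Pf L (\<lambda>X. J X \<omega>) \<beta>)" by (rule P_int[OF b])
    fix \<omega>
    show "\<beta> / real (card L) * xs L (\<lambda>X. J X \<omega>) \<sigma>0 \<le> Pf L (\<lambda>X. J X \<omega>) \<beta>"
      using Pf_ge[OF finL s0, of \<beta> "\<lambda>X. J X \<omega>"] by simp
  qed
  moreover have "expectation (\<lambda>\<omega>. \<beta> / real (card L) * xs L (\<lambda>X. J X \<omega>) \<sigma>0) = 0"
    by (simp add: xs_mean)
  ultimately show ?thesis by linarith
qed

lemma exp_xs_mean:
  assumes s: "\<sigma> \<in> configs L"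
  shows "integrable M (\<lambda>\<omega>. exp (\<beta> * xs L (\<lambda>X. J X \<omega>) \<sigma>))"
    and "expectation (\<lambda>\<omega>. exp (\<beta> * xs L (\<lambda>X. J X \<omega>) \<sigma>)) \<le> exp (\<beta>\<^sup>2 * (\<Sum>X\<in>Pow L. (\<Delta> X)\<^sup>2) / 2)"
proof -
  define Y where "Y X \<omega> = exp (\<beta> * sigmaX \<sigma> X * J X \<omega>)" for X \<omega>
  have eq: "exp (\<beta> * xs L (\<lambda>X. J X \<omega>) \<sigma>) = (\<Prod>X\<in>Pow L. Y X \<omega>)" for \<omega>
    unfolding xs_def Y_def sum_distrib_left using finL
    by (simp add: exp_sum algebra_simps)
  have ind: "indep_vars (\<lambda>_. borel) J (Pow L)"
    by (rule indep_vars_subset[OF indep]) (auto intro: finPow)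
  have indY: "indep_vars (\<lambda>_. borel) Y (Pow L)"
    unfolding Y_def by (rule indep_vars_compose2[OF ind]) simp
  have intY: "integrable M (Y X)" if "X \<in> Pow L" for X
    unfolding Y_def using J_mgf(1)[OF finPow[OF that], of "\<beta> * sigmaX \<sigma> X"] by simp
  have EY: "expectation (Y X) \<le> exp (\<beta>\<^sup>2 * (\<Delta> X)\<^sup>2 / 2)" if X: "X \<in> Pow L" for X
  proof -
    have "expectation (Y X) = exp ((\<beta> * sigmaX \<sigma> X)\<^sup>2 * (\<Delta> X)\<^sup>2 / 2)"
      unfolding Y_def using J_mgf(2)[OF finPow[OF X], of "\<beta> * sigmaX \<sigma> X"] by simp
    also have "\<dots> \<le> exp (\<beta>\<^sup>2 * (\<Delta> X)\<^sup>2 / 2)"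
    proof -
      have "\<bar>sigmaX \<sigma> X\<bar> \<le> 1" using sigmaX_abs[OF s] X by simp
      then have "\<bar>sigmaX \<sigma> X\<bar>\<^sup>2 \<le> 1\<^sup>2" by (intro power_mono) auto
      then have "(sigmaX \<sigma> X)\<^sup>2 \<le> 1" by simp
      then have "\<beta>\<^sup>2 * (sigmaX \<sigma> X)\<^sup>2 \<le> \<beta>\<^sup>2 * 1" by (intro mult_left_mono) auto
      then have "(\<beta> * sigmaX \<sigma> X)\<^sup>2 * (\<Delta> X)\<^sup>2 \<le> \<beta>\<^sup>2 * (\<Delta> X)\<^sup>2"
        by (simp add: power_mult_distrib mult_right_mono)
      then show ?thesis by simp
    qed
    finally show ?thesis .
  qed
  have "integrable M (\<lambda>\<omega>. \<Prod>X\<in>Pow L. Y X \<omega>)"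
    by (rule indep_vars_integrable) (use finL indY intY in auto)
  then show "integrable M (\<lambda>\<omega>. exp (\<beta> * xs L (\<lambda>X. J X \<omega>) \<sigma>))" unfolding eq .
  have "expectation (\<lambda>\<omega>. exp (\<beta> * xs L (\<lambda>X. J X \<omega>) \<sigma>)) = (\<Prod>X\<in>Pow L. expectation (Y X))"
    unfolding eq by (rule indep_vars_lebesgue_integral) (use finL indY intY in auto)
  also have "\<dots> \<le> (\<Prod>X\<in>Pow L. exp (\<beta>\<^sup>2 * (\<Delta> X)\<^sup>2 / 2))"
    by (rule prod_mono) (auto intro!: EY integral_nonneg_AE simp: Y_def)
  also have "\<dots> = exp (\<beta>\<^sup>2 * (\<Sum>X\<in>Pow L. (\<Delta> X)\<^sup>2) / 2)"
    using finL by (simp add: exp_sum[symmetric] sum_distrib_left sum_divide_distrib)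
  finally show "expectation (\<lambda>\<omega>. exp (\<beta> * xs L (\<lambda>X. J X \<omega>) \<sigma>)) \<le> exp (\<beta>\<^sup>2 * (\<Sum>X\<in>Pow L. (\<Delta> X)\<^sup>2) / 2)" .
qed

lemma P_mean_upper:
  assumes b: "0 \<le> \<beta>"
  shows "expectation (\<lambda>\<omega>. Pf L (\<lambda>X. J X \<omega>) \<beta>) \<le> ln 2 + \<beta>\<^sup>2 * (\<Sum>X\<in>Pow L. (\<Delta> X)\<^sup>2) / (2 * real (card L))"
proof -
  let ?Z = "\<lambda>\<omega>. Zf L (\<lambda>X. J X \<omega>) \<beta>"
  let ?E = "\<beta>\<^sup>2 * (\<Sum>X\<in>Pow L. (\<Delta> X)\<^sup>2) / 2"
  have N: "0 < real (card L)" using cardpos by simp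
  have Zint: "integrable M ?Z"
    unfolding Zf_def by (auto intro!: Bochner_Integration.integrable_sum exp_xs_mean(1))
  have EZ: "expectation ?Z \<le> real (card (configs L)) * exp ?E"
  proof -
    have "expectation ?Z = (\<Sum>\<sigma>\<in>configs L. expectation (\<lambda>\<omega>. exp (\<beta> * xs L (\<lambda>X. J X \<omega>) \<sigma>)))"
      unfolding Zf_def by (rule Bochner_Integration.integral_sum) (auto intro!: exp_xs_mean(1))
    also have "\<dots> \<le> (\<Sum>\<sigma>\<in>configs L. exp ?E)"
      by (rule sum_mono) (rule exp_xs_mean(2))
    finally show ?thesis by simp
  qed
  have Zpos: "0 < ?Z \<omega>" for \<omega> by (rule Zf_pos[OF finL])
  define m where "m = expectation ?Z"
  have mpos: "0 < m"
  proof -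
    have "expectation (\<lambda>_. 0::real) < expectation ?Z"
      by (rule integral_less_AE_space) (use Zint Zpos in \<open>auto simp: emeasure_space_1\<close>)
    then show ?thesis by (simp add: m_def)
  qed
  have lnZ: "integrable M (\<lambda>\<omega>. ln (?Z \<omega>))"
  proof -
    have "integrable M (\<lambda>\<omega>. real (card L) * Pf L (\<lambda>X. J X \<omega>) \<beta>)" using P_int[OF b] by simp
    then show ?thesis using N by (simp add: Pf_def)
  qed
  have pw: "ln (?Z \<omega>) \<le> ln m + ?Z \<omega> / m - 1" for \<omega>
  proof -
    have "ln (?Z \<omega> / m) \<le> ?Z \<omega> / m - 1" by (rule ln_le_minus_one) (use Zpos mpos in simp)
    then show ?thesis using Zpos[of \<omega>] mpos by (simp add: ln_div)
  qed
  have "expectation (\<lambda>\<omega>. ln (?Z \<omega>)) \<le> expectation (\<lambda>\<omega>. ln m + ?Z \<omega> / m - 1)"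
    by (rule integral_mono) (use lnZ Zint pw in auto)
  also have "\<dots> = ln m + m / m - 1"
    using Zint by (simp add: m_def prob_space)
  also have "\<dots> = ln m" using mpos by simp
  also have "\<dots> \<le> ln (real (card (configs L)) * exp ?E)"
    using mpos EZ by (simp add: m_def)
  also have "\<dots> = real (card L) * ln 2 + ?E"
    using finL by (simp add: card_configs ln_mult ln_realpow)
  finally have "expectation (\<lambda>\<omega>. ln (?Z \<omega>)) \<le> real (card L) * ln 2 + ?E" .
  then have "expectation (\<lambda>\<omega>. ln (?Z \<omega>)) / real (card L) \<le> (real (card L) * ln 2 + ?E) / real (card L)"
    by (rule divide_right_mono) simp
  then show ?thesis using N by (simp add: Pf_def add_divide_distrib)
qed

end


lemma lattice_box_finite: "finite (lattice_box (a::int^'d) b)"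
proof -
  have "lattice_box a b \<subseteq> vec_lambda ` (PiE UNIV (\<lambda>i. {a$i..b$i}))"
  proof
    fix x assume "x \<in> lattice_box a b"
    then have "(\<lambda>i. x$i) \<in> PiE UNIV (\<lambda>i. {a$i..b$i})" by (auto simp: lattice_box_def)
    moreover have "x = vec_lambda (\<lambda>i. x$i)" by simp
    ultimately show "x \<in> vec_lambda ` (PiE UNIV (\<lambda>i. {a$i..b$i}))" by blast
  qed
  moreover have "finite (PiE UNIV (\<lambda>i. {a$i..b$i}))" by (intro finite_PiE) auto
  ultimately show ?thesis by (meson finite_imageI finite_subset)
qed

lemma box_finite: "is_box L \<Longrightarrow> finite L"
  unfolding is_box_def using lattice_box_finite by blast

lemma key_bound:
  fixes M :: "'a measure" and J :: "'i set \<Rightarrow> 'a \<Rightarrow> real" and \<Delta> :: "'i set \<Rightarrow> real"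
  assumes sg: "sg M J \<Delta>" and finL: "finite L" and cardL: "0 < card L"
    and sumb: "(\<Sum>X\<in>Pow L. (\<Delta> X)\<^sup>2) \<le> c * real (card L)" and c0: "0 \<le> c"
    and b: "0 < \<beta>1" "\<beta>1 < \<beta>2" and K: "1 \<le> K" and hdef: "h = (\<beta>2 - \<beta>1) / real K"
    and h1: "h \<le> \<beta>1 / 2" and h2: "h \<le> 1"
    and T_def: "T = \<beta>2 + 2" and C_def: "C = ln 2 + T\<^sup>2 * c / 2" and V_def: "V = T\<^sup>2 * c / real (card L)"
  shows "0 \<le> (LBINT \<beta>=\<beta>1..\<beta>2. energy_variance M J L \<beta>) \<and>
    (LBINT \<beta>=\<beta>1..\<beta>2. energy_variance M J L \<beta>) \<le> 8 * (\<beta>2 - \<beta>1) * V / h\<^sup>2 + 64 * V / h + 4 * h * (C + 2 * C / \<beta>1)\<^sup>2"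
proof -
  have neL: "L \<noteq> {}" using cardL by auto
  interpret sgL M J \<Delta> L
    using sg finL neL by (simp add: sgL_def sgL_axioms_def)
  have N: "0 < real (card L)" using cardL by simp
  interpret G: cvx_grid M "\<lambda>\<beta> \<omega>. Pf L (\<lambda>X. J X \<omega>) \<beta>" "\<lambda>\<beta> \<omega>. af L (\<lambda>X. J X \<omega>) \<beta>" T V C \<beta>1 \<beta>2 h K
  proof unfold_locales
    show "(\<lambda>\<omega>. Pf L (\<lambda>X. J X \<omega>) \<beta>) \<in> borel_measurable M" for \<beta> by (rule PM)
    show "(\<lambda>\<omega>. af L (\<lambda>X. J X \<omega>) \<beta>) \<in> borel_measurable M" for \<beta> by (rule aM)
    show "integrable M (\<lambda>\<omega>. (Pf L (\<lambda>X. J X \<omega>) \<beta>)\<^sup>2)" if "0 \<le> \<beta>" for \<beta> by (rule P_sq[OF that])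
    show "integrable M (\<lambda>\<omega>. (af L (\<lambda>X. J X \<omega>) \<beta>)\<^sup>2)" for \<beta> by (rule a_sq)
    show "af L (\<lambda>X. J X \<omega>) x * (y - x) \<le> Pf L (\<lambda>X. J X \<omega>) y - Pf L (\<lambda>X. J X \<omega>) x" for \<omega> x y
      by (rule Pf_chord[OF finL])
    show "variance (\<lambda>\<omega>. Pf L (\<lambda>X. J X \<omega>) \<beta>) \<le> V" if "0 \<le> \<beta>" "\<beta> \<le> T" for \<beta>
    proof -
      have "variance (\<lambda>\<omega>. Pf L (\<lambda>X. J X \<omega>) \<beta>) \<le> (\<beta> / real (card L))\<^sup>2 * (\<Sum>X\<in>Pow L. (\<Delta> X)\<^sup>2)"
        by (rule P_var[OF that(1)])
      also have "\<dots> \<le> (\<beta> / real (card L))\<^sup>2 * (c * real (card L))"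
        by (rule mult_left_mono[OF sumb]) simp
      also have "\<dots> = \<beta>\<^sup>2 * c / real (card L)" using N by (simp add: power2_eq_square field_simps)
      also have "\<dots> \<le> T\<^sup>2 * c / real (card L)"
        using that c0 N by (intro divide_right_mono mult_right_mono power_mono) auto
      finally show ?thesis by (simp add: V_def)
    qed
    show "0 \<le> expectation (\<lambda>\<omega>. Pf L (\<lambda>X. J X \<omega>) \<beta>) \<and> expectation (\<lambda>\<omega>. Pf L (\<lambda>X. J X \<omega>) \<beta>) \<le> C"
      if "0 \<le> \<beta>" "\<beta> \<le> T" for \<beta>
    proof
      show "0 \<le> expectation (\<lambda>\<omega>. Pf L (\<lambda>X. J X \<omega>) \<beta>)" by (rule P_mean_lower[OF that(1)])
      have "expectation (\<lambda>\<omega>. Pf L (\<lambda>X. J X \<omega>) \<beta>) \<le> ln 2 + \<beta>\<^sup>2 * (\<Sum>X\<in>Pow L. (\<Delta> X)\<^sup>2) / (2 * real (card L))"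
        by (rule P_mean_upper[OF that(1)])
      also have "\<beta>\<^sup>2 * (\<Sum>X\<in>Pow L. (\<Delta> X)\<^sup>2) / (2 * real (card L)) \<le> \<beta>\<^sup>2 * (c * real (card L)) / (2 * real (card L))"
        using sumb N by (intro divide_right_mono mult_left_mono) auto
      also have "\<beta>\<^sup>2 * (c * real (card L)) / (2 * real (card L)) = \<beta>\<^sup>2 * c / 2" using N by simp
      also have "\<beta>\<^sup>2 * c / 2 \<le> T\<^sup>2 * c / 2"
        using that c0 by (intro divide_right_mono mult_right_mono power_mono) auto
      finally show "expectation (\<lambda>\<omega>. Pf L (\<lambda>X. J X \<omega>) \<beta>) \<le> C" by (simp add: C_def)
    qed
    show "0 < \<beta>1" "\<beta>1 < \<beta>2" "1 \<le> K" "h = (\<beta>2 - \<beta>1) / real K" "h \<le> \<beta>1 / 2" using assms by auto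
    show "\<beta>2 + h + 1 \<le> T" using h2 by (simp add: T_def)
  qed
  have eq: "(\<lambda>\<beta>. energy_variance M J L \<beta>) =
     (\<lambda>\<beta>. (\<integral>\<omega>. (af L (\<lambda>X. J X \<omega>) \<beta>)\<^sup>2 \<partial>M) - (expectation (\<lambda>\<omega>. af L (\<lambda>X. J X \<omega>) \<beta>))\<^sup>2)"
    by (simp add: ev_eq)
  show ?thesis unfolding eq using G.grid_bound by simp
qed

theorem lemma4:
  fixes M :: "'a measure" and J :: "(int ^ 'd) set \<Rightarrow> 'a \<Rightarrow> real"
    and \<Delta> :: "(int ^ 'd) set \<Rightarrow> real" and \<beta>1 \<beta>2 :: real
    and L :: "nat \<Rightarrow> (int ^ 'd) set"
  assumes "prob_space M"
    and "prob_space.indep_vars M (\<lambda>_. borel) J {X. finite X}"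
    and "\<And>X. finite X \<Longrightarrow> \<Delta> X \<ge> 0"
    and "\<And>X. finite X \<Longrightarrow> \<Delta> X > 0 \<Longrightarrow> distributed M lborel (J X) (normal_density 0 (\<Delta> X))"
    and "\<And>X. finite X \<Longrightarrow> \<Delta> X = 0 \<Longrightarrow> (AE \<omega> in M. J X \<omega> = 0)"
    and "\<And>X a. finite X \<Longrightarrow> \<Delta> ((\<lambda>x. x + a) ` X) = \<Delta> X"
    and "thermo_stable \<Delta>"
    and "0 < \<beta>1" and "\<beta>1 < \<beta>2"
    and "\<And>n. is_box (L n)"
    and "filterlim (\<lambda>n. card (L n)) at_top sequentially"
  shows "(\<lambda>n. LBINT \<beta>=\<beta>1..\<beta>2. energy_variance M J (L n) \<beta>) \<longlonglongrightarrow> 0"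
proof -
  have sg: "sg M J \<Delta>"
    using assms(1-5) by (simp add: sg_def sg_axioms_def)
  obtain c where c: "\<And>L. is_box L \<Longrightarrow> (\<Sum>X\<in>Pow L. (\<Delta> X)\<^sup>2) / real (card L) \<le> c"
    using assms(7) unfolding thermo_stable_def by blast
  define c' where "c' = max c 0"
  have c'0: "0 \<le> c'" by (simp add: c'_def)
  define T where "T = \<beta>2 + 2"
  define C where "C = ln 2 + T\<^sup>2 * c' / 2"
  define R where "R = C + 2 * C / \<beta>1"
  define V where "V n = T\<^sup>2 * c' / real (card (L n))" for n
  define I where "I n = (LBINT \<beta>=\<beta>1..\<beta>2. energy_variance M J (L n) \<beta>)" for n
  have fin: "finite (L n)" for n using box_finite assms(10) by blast
  have sumb: "(\<Sum>X\<in>Pow (L n). (\<Delta> X)\<^sup>2) \<le> c' * real (card (L n))" if "0 < card (L n)" for n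
  proof -
    have "(\<Sum>X\<in>Pow (L n). (\<Delta> X)\<^sup>2) / real (card (L n)) \<le> c'"
      using c[OF assms(10)[of n]] by (simp add: c'_def)
    then show ?thesis using that by (simp add: pos_divide_le_eq)
  qed
  have key: "\<bar>I n\<bar> \<le> 8 * (\<beta>2 - \<beta>1) * V n / h\<^sup>2 + 64 * V n / h + 4 * h * R\<^sup>2"
    if "0 < card (L n)" "1 \<le> K" "h = (\<beta>2 - \<beta>1) / real K" "h \<le> \<beta>1 / 2" "h \<le> 1" for n K h
    using key_bound[OF sg fin that(1) sumb[OF that(1)] c'0 assms(8,9) that(2-5) T_def C_def V_def]
    unfolding I_def R_def by linarith
  show ?thesis
    unfolding I_def[symmetric] tendsto_iff dist_real_def
  proof (intro allI impI)
    fix \<epsilon> :: real assume e: "0 < \<epsilon>"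
    let ?h = "\<lambda>K::nat. (\<beta>2 - \<beta>1) / real K"
    have h0: "?h \<longlonglongrightarrow> 0" by (rule lim_const_over_n)
    have hR: "(\<lambda>K. 4 * ?h K * R\<^sup>2) \<longlonglongrightarrow> 0"
      using tendsto_mult[OF tendsto_mult[OF tendsto_const h0] tendsto_const, of 4 "R\<^sup>2"] by simp
    have "eventually (\<lambda>K. ?h K < \<beta>1 / 2) sequentially"
      by (rule order_tendstoD(2)[OF h0]) (use assms(8) in simp)
    moreover have "eventually (\<lambda>K. ?h K < 1) sequentially"
      by (rule order_tendstoD(2)[OF h0]) simp
    moreover have "eventually (\<lambda>K. 4 * ?h K * R\<^sup>2 < \<epsilon> / 2) sequentially"
      by (rule order_tendstoD(2)[OF hR]) (use e in simp)
    moreover have "eventually (\<lambda>K. 1 \<le> K) sequentially" by (rule eventually_ge_at_top)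
    ultimately have "eventually (\<lambda>K. ?h K < \<beta>1 / 2 \<and> ?h K < 1 \<and> 4 * ?h K * R\<^sup>2 < \<epsilon> / 2 \<and> 1 \<le> K) sequentially"
      by eventually_elim auto
    then obtain N0 where N0: "\<And>K. K \<ge> N0 \<Longrightarrow> ?h K < \<beta>1 / 2 \<and> ?h K < 1 \<and> 4 * ?h K * R\<^sup>2 < \<epsilon> / 2 \<and> 1 \<le> K"
      unfolding eventually_sequentially by blast
    define K where "K = N0"
    have K: "?h K < \<beta>1 / 2" "?h K < 1" "4 * ?h K * R\<^sup>2 < \<epsilon> / 2" "1 \<le> K"
      using N0[of N0] by (simp_all add: K_def)
    define h where "h = ?h K"
    have hpos: "0 < h" using K(4) assms(9) by (simp add: h_def)
    have cardinf: "filterlim (\<lambda>n. real (card (L n))) at_top sequentially"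
      by (rule filterlim_compose[OF filterlim_real_sequentially assms(11)])
    have V0: "V \<longlonglongrightarrow> 0"
      unfolding V_def
      by (rule tendsto_divide_0[OF tendsto_const filterlim_at_top_imp_at_infinity[OF cardinf]])
    have B0: "(\<lambda>n. 8 * (\<beta>2 - \<beta>1) * V n / h\<^sup>2 + 64 * V n / h) \<longlonglongrightarrow> 0"
      using hpos by (auto intro!: tendsto_eq_intros V0)
    have "eventually (\<lambda>n. 8 * (\<beta>2 - \<beta>1) * V n / h\<^sup>2 + 64 * V n / h < \<epsilon> / 2) sequentially"
      by (rule order_tendstoD(2)[OF B0]) (use e in simp)
    moreover have "eventually (\<lambda>n. 0 < real (card (L n))) sequentially"
      using cardinf unfolding filterlim_at_top_dense by blast
    ultimately show "eventually (\<lambda>n. \<bar>I n - 0\<bar> < \<epsilon>) sequentially"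
    proof eventually_elim
      case (elim n)
      have "\<bar>I n\<bar> \<le> 8 * (\<beta>2 - \<beta>1) * V n / h\<^sup>2 + 64 * V n / h + 4 * h * R\<^sup>2"
        by (rule key) (use elim K in \<open>auto simp: h_def\<close>)
      then show ?case using elim K(3) by (simp add: h_def)
    qed
  qed
qed


end
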